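(* Fix $\ell_0>0$ and $h_0>0$. There exist $U_0=U_0(\ell_0,d,h_0,t)$ and a function $\varepsilon_{\rm ch}(U,\beta;h_0)\ge0$ such that for all $U\ge U_0$, all $\beta>0$ with $\beta J_0(U)\ge\ell_0$, all $L\in2\mathbb N$ and all $|h|\le h_0$, writing $\omega=\omega^{\rm Hub}_{\Lambda_L,\beta,U,h}$: \[ \frac1{|\Lambda_L|}\sum_{x\in\Lambda_L}\omega(q_x)\le\varepsilon_{\rm ch}(U,\beta;h_0),\qquad \frac1{|\Lambda_L|}\sum_{x\in\Lambda_L}\omega(n_{x\uparrow}n_{x\downarrow})\le\tfrac12\varepsilon_{\rm ch}(U,\beta;h_0), \] \[ \Bigl|\frac1{|\Lambda_L|}\omega(C^{\rm ch}_{\Lambda_L})\Bigr|\le\varepsilon_{\rm ch}(U,\beta;h_0),\qquad \frac1{|\Lambda_L|^2}\omega\bigl((C^{\rm ch}_{\Lambda_L})^2\bigr)\le\varepsilon_{\rm ch}(U,\beta;h_0). \] Finally, $\lim_{U\to\infty}\sup_{\beta J_0(U)\ge\ell_0}\varepsilon_{\rm ch}(U,\beta;h_0)=0$.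
   Context: $d\ge1$, $t\in\mathbb R\setminus\{0\}$; $\Lambda_L=(\mathbb Z/L\mathbb Z)^d$ ($L\in2\mathbb N$), $\mathscr B_{\Lambda_L}$ the unordered nearest-neighbour bonds (each once). Fermionic Fock space over $\ell^2(\Lambda_L)\otimes\mathbb C^2$ with CAR operators $c_{x\sigma}$; $n_{x\sigma}=c^*_{x\sigma}c_{x\sigma}$, $n_x=n_{x\uparrow}+n_{x\downarrow}$; half-filled sector $\mathcal H^{\rm hf}_{\Lambda_L}=\ker(\sum_xn_x-|\Lambda_L|)$. $D_{\Lambda_L}=\sum_xn_{x\uparrow}n_{x\downarrow}$, $T_{\Lambda_L}=-t\sum_{\{x,y\}\in\mathscr B}\sum_\sigma(c^*_{x\sigma}c_{y\sigma}+c^*_{y\sigma}c_{x\sigma})$, $\eta_x=(-1)^{x_1+\dots+x_d}$, $M_{\Lambda_L}=\sum_x\eta_x\frac12(n_{x\uparrow}-n_{x\downarrow})$, $H^{\rm Hub}_{\Lambda_L}(h)=UD_{\Lambda_L}+T_{\Lambda_L}-hM_{\Lambda_L}$ on $\mathcal H^{\rm hf}_{\Lambda_L}$ ($U>0$). $\omega^{\rm Hub}_{\Lambda_L,\beta,U,h}(O)=\operatorname{Tr}_{\mathcal H^{\rm hf}}(Oe^{-\beta H^{\rm Hub}_{\Lambda_L}(h)})/\operatorname{Tr}_{\mathcal H^{\rm hf}}e^{-\beta H^{\rm Hub}_{\Lambda_L}(h)}$. $J_0(U)=4t^2/U$. Charge observables: $q_x=(n_x-1)^2$ and $C^{\rm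 ch}_{\Lambda_L}=\sum_{x\in\Lambda_L}\eta_x(n_x-1)$. *)

theory Defs
  imports Complex_Main "HOL-Library.Extended_Real"
begin

text \<open>Sites of the torus (Z/LZ)^d are encoded by s < L^d, with coordinates
  coord L s i = (s div L^i) mod L.  The Fock space has orthonormal basis
  indexed by occupation sets S \<subseteq> {0..<2 L^d}; operators are matrices
  indexed by pairs of such sets (entry T S = <T|A|S>).  Fermionic signs follow
  the Jordan-Wigner convention for the mode order.\<close>

type_synonym fop = "nat set \<Rightarrow> nat set \<Rightarrow> complex"

datatype spin = Up | Dn

definition nsites :: "nat \<Rightarrow> nat \<Rightarrow> nat" where
  "nsites L d = L ^ d"

definition nmodes :: "nat \<Rightarrow> nat \<Rightarrow> nat" where
  "nmodes L d = 2 * L ^ d"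

definition mode :: "nat \<Rightarrow> spin \<Rightarrow> nat" where
  "mode x \<sigma> = (case \<sigma> of Up \<Rightarrow> 2 * x | Dn \<Rightarrow> 2 * x + 1)"

definition op_id :: fop where
  "op_id = (\<lambda>T S. if T = S then 1 else 0)"

definition op_add :: "fop \<Rightarrow> fop \<Rightarrow> fop" where
  "op_add A B = (\<lambda>T S. A T S + B T S)"

definition op_smult :: "complex \<Rightarrow> fop \<Rightarrow> fop" where
  "op_smult c A = (\<lambda>T S. c * A T S)"

definition op_sum :: "('i \<Rightarrow> fop) \<Rightarrow> 'i set \<Rightarrow> fop" where
  "op_sum f I = (\<lambda>T S. \<Sum>i\<in>I. f i T S)"

definition op_mult :: "nat \<Rightarrow> fop \<Rightarrow> fop \<Rightarrow> fop" where
  "op_mult M A B = (\<lambda>T S. \<Sum>R\<in>Pow {0..<M}. A T R * B R S)"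

primrec op_pow :: "nat \<Rightarrow> fop \<Rightarrow> nat \<Rightarrow> fop" where
  "op_pow M A 0 = op_id"
| "op_pow M A (Suc n) = op_mult M A (op_pow M A n)"

definition op_exp :: "nat \<Rightarrow> fop \<Rightarrow> fop" where
  "op_exp M A = (\<lambda>T S. \<Sum>n. op_pow M A n T S / of_nat (fact n))"

definition ann :: "nat \<Rightarrow> fop" where
  "ann m = (\<lambda>T S. if m \<in> S \<and> T = S - {m}
                    then (-1) ^ card {k \<in> S. k < m} else 0)"

definition cre :: "nat \<Rightarrow> fop" where
  "cre m = (\<lambda>T S. cnj (ann m S T))"

definition coord :: "nat \<Rightarrow> nat \<Rightarrow> nat \<Rightarrow> nat" where
  "coord L s i = (s div L ^ i) mod L"

definition sites :: "nat \<Rightarrow> nat \<Rightarrow> nat set" where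
  "sites L d = {0..<L ^ d}"

text \<open>Translation by the unit vector e_i on the torus.\<close>
definition shift :: "nat \<Rightarrow> nat \<Rightarrow> nat \<Rightarrow> nat" where
  "shift L s i = s - coord L s i * L ^ i + ((coord L s i + 1) mod L) * L ^ i"

definition bonds :: "nat \<Rightarrow> nat \<Rightarrow> nat set set" where
  "bonds L d = {{s, shift L s i} | s i. s \<in> sites L d \<and> i < d}"

definition eta :: "nat \<Rightarrow> nat \<Rightarrow> nat \<Rightarrow> complex" where
  "eta L d x = (-1) ^ (\<Sum>i<d. coord L x i)"

definition num :: "nat \<Rightarrow> nat \<Rightarrow> nat \<Rightarrow> spin \<Rightarrow> fop" where
  "num L d x \<sigma> = op_mult (nmodes L d) (cre (mode x \<sigma>)) (ann (mode x \<sigma>))"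

definition ntot :: "nat \<Rightarrow> nat \<Rightarrow> nat \<Rightarrow> fop" where
  "ntot L d x = op_add (num L d x Up) (num L d x Dn)"

definition double_occ :: "nat \<Rightarrow> nat \<Rightarrow> fop" where
  "double_occ L d = op_sum (\<lambda>x. op_mult (nmodes L d) (num L d x Up) (num L d x Dn)) (sites L d)"

definition hopping :: "nat \<Rightarrow> nat \<Rightarrow> real \<Rightarrow> fop" where
  "hopping L d t = op_smult (- complex_of_real t)
     (op_sum (\<lambda>B. op_sum (\<lambda>\<sigma>. op_sum (\<lambda>x. op_sum (\<lambda>y.
         op_mult (nmodes L d) (cre (mode x \<sigma>)) (ann (mode y \<sigma>))) (B - {x})) B) {Up, Dn})
       (bonds L d))"

definition stag_mag :: "nat \<Rightarrow> nat \<Rightarrow> fop" where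
  "stag_mag L d = op_sum (\<lambda>x. op_smult (eta L d x / 2)
       (op_add (num L d x Up) (op_smult (-1) (num L d x Dn)))) (sites L d)"

definition hubbard_H :: "nat \<Rightarrow> nat \<Rightarrow> real \<Rightarrow> real \<Rightarrow> real \<Rightarrow> fop" where
  "hubbard_H L d t U h = op_add (op_smult (complex_of_real U) (double_occ L d))
      (op_add (hopping L d t) (op_smult (- complex_of_real h) (stag_mag L d)))"

text \<open>Trace over the half-filled sector (exactly L^d particles).\<close>
definition trace_hf :: "nat \<Rightarrow> nat \<Rightarrow> fop \<Rightarrow> complex" where
  "trace_hf L d X = (\<Sum>S\<in>{S \<in> Pow {0..<nmodes L d}. card S = nsites L d}. X S S)"

definition gibbs_hf :: "nat \<Rightarrow> nat \<Rightarrow> real \<Rightarrow> real \<Rightarrow> real \<Rightarrow> real \<Rightarrow> fop \<Rightarrow> complex" where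
  "gibbs_hf L d t \<beta> U h Obs =
     (let E = op_exp (nmodes L d) (op_smult (- complex_of_real \<beta>) (hubbard_H L d t U h))
      in trace_hf L d (op_mult (nmodes L d) Obs E) / trace_hf L d E)"

definition J0 :: "real \<Rightarrow> real \<Rightarrow> real" where
  "J0 t U = 4 * t ^ 2 / U"

definition q_ch :: "nat \<Rightarrow> nat \<Rightarrow> nat \<Rightarrow> fop" where
  "q_ch L d x = (let A = op_add (ntot L d x) (op_smult (-1) op_id)
                 in op_mult (nmodes L d) A A)"

definition C_ch :: "nat \<Rightarrow> nat \<Rightarrow> fop" where
  "C_ch L d = op_sum (\<lambda>x. op_smult (eta L d x) (op_add (ntot L d x) (op_smult (-1) op_id))) (sites L d)"

end

theory Submission
  imports Defs "Jordan_Normal_Form.Char_Poly"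
begin





definition mm :: "'a set \<Rightarrow> ('a \<Rightarrow> 'a \<Rightarrow> complex) \<Rightarrow> ('a \<Rightarrow> 'a \<Rightarrow> complex) \<Rightarrow> 'a \<Rightarrow> 'a \<Rightarrow> complex" where
  "mm I A B = (\<lambda>i j. \<Sum>k\<in>I. A i k * B k j)"
definition adjm :: "('a \<Rightarrow> 'a \<Rightarrow> complex) \<Rightarrow> 'a \<Rightarrow> 'a \<Rightarrow> complex" where
  "adjm A = (\<lambda>i j. cnj (A j i))"
definition idm :: "'a \<Rightarrow> 'a \<Rightarrow> complex" where
  "idm = (\<lambda>i j. if i = j then 1 else 0)"
definition eqon :: "'a set \<Rightarrow> ('a \<Rightarrow> 'a \<Rightarrow> complex) \<Rightarrow> ('a \<Rightarrow> 'a \<Rightarrow> complex) \<Rightarrow> bool" where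
  "eqon I A B \<longleftrightarrow> (\<forall>i\<in>I. \<forall>j\<in>I. A i j = B i j)"

lemma mm_assoc: "finite I \<Longrightarrow> mm I (mm I A B) C = mm I A (mm I B C)"
  unfolding mm_def
  by (auto simp: sum_distrib_left sum_distrib_right mult.assoc intro!: ext sum.swap)

lemma adjm_mm: "adjm (mm I A B) = mm I (adjm B) (adjm A)"
  unfolding mm_def adjm_def by (auto intro!: ext simp: mult.commute)

lemma adjm_adjm[simp]: "adjm (adjm A) = A"
  unfolding adjm_def by auto

lemma mm_idm_left: "finite I \<Longrightarrow> i \<in> I \<Longrightarrow> mm I idm B i j = B i j"
  unfolding mm_def idm_def by (simp add: if_distrib[of "\<lambda>x. x * _"] cong: if_cong)

lemma mm_idm_right: "finite I \<Longrightarrow> j \<in> I \<Longrightarrow> mm I B idm i j = B i j"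
  unfolding mm_def idm_def by (simp add: if_distrib[of "\<lambda>x. _ * x"] cong: if_cong)

lemma mm_cong: "eqon I A A' \<Longrightarrow> eqon I B B' \<Longrightarrow> eqon I (mm I A B) (mm I A' B')"
  unfolding eqon_def mm_def by auto

lemma mm_cong_pt: "eqon I A A' \<Longrightarrow> eqon I B B' \<Longrightarrow> i \<in> I \<Longrightarrow> j \<in> I \<Longrightarrow> mm I A B i j = mm I A' B' i j"
  using mm_cong unfolding eqon_def by blast

lemma eqon_trans: "eqon I A B \<Longrightarrow> eqon I B C \<Longrightarrow> eqon I A C"
  unfolding eqon_def by auto
lemma eqon_sym: "eqon I A B \<Longrightarrow> eqon I B A"
  unfolding eqon_def by auto
lemma eqon_refl: "eqon I A A"
  unfolding eqon_def by auto
lemma eqon_subset: "eqon I A B \<Longrightarrow> J \<subseteq> I \<Longrightarrow> eqon J A B"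
  unfolding eqon_def by auto


lemma cnj_self: "cnj a * a = of_real (cmod a) * of_real (cmod a)"
proof -
  have "cnj a * a = of_real ((cmod a)^2)" using complex_norm_square[of a] by (simp only: mult.commute)
  then show ?thesis by (simp only: of_real_mult power2_eq_square)
qed
lemma ph1: "cnj (if a = 0 then 1 else a / of_real (cmod a)) * (if a = 0 then 1 else a / of_real (cmod a)) = (1::complex)"
proof (cases "a = 0")
  case False
  then have r: "(of_real (cmod a) :: complex) \<noteq> 0" by simp
  have "cnj (a / of_real (cmod a)) * (a / of_real (cmod a)) = (cnj a * a) / (of_real (cmod a) * of_real (cmod a))"
    by simp
  also have "\<dots> = 1" using r by (simp only: cnj_self) simp
  finally show ?thesis using False by simp
qed simp
lemma ph2: "cnj a * (if a = 0 then 1 else a / of_real (cmod a)) = of_real (cmod a)"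
proof (cases "a = 0")
  case False
  then have r: "(of_real (cmod a) :: complex) \<noteq> 0" by simp
  have "cnj a * (a / of_real (cmod a)) = (cnj a * a) / of_real (cmod a)" by simp
  also have "\<dots> = of_real (cmod a)" using r by (simp only: cnj_self) simp
  finally show ?thesis using False by simp
qed simp


lemma householder:
  fixes x :: "'a \<Rightarrow> complex"
  assumes fin: "finite I" and i0: "i0 \<in> I" and unit: "(\<Sum>i\<in>I. cnj (x i) * x i) = 1"
  shows "\<exists>W c. eqon I (adjm W) W \<and> eqon I (mm I W W) idm \<and> (\<forall>i\<in>I. W i i0 = c * x i) \<and> c \<noteq> 0"
proof -
  define a where "a = x i0"
  define \<phi> where "\<phi> = (if a = 0 then 1 else a / of_real (cmod a))"
  have ph1: "cnj \<phi> * \<phi> = 1" unfolding \<phi>_def by (rule ph1)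
  have ph2: "cnj a * \<phi> = of_real (cmod a)" unfolding \<phi>_def by (rule ph2)
  have ph3: "cnj \<phi> * a = of_real (cmod a)"
    using arg_cong[OF ph2, of cnj] by (simp add: mult.commute)
  define w where "w i = (if i = i0 then \<phi> else 0)" for i
  define u where "u i = x i - w i" for i
  define s where "s = (\<Sum>i\<in>I. cnj (u i) * u i)"
  have sxw: "(\<Sum>i\<in>I. cnj (x i) * w i) = cnj a * \<phi>"
  proof -
    have "(\<Sum>i\<in>I. cnj (x i) * w i) = (\<Sum>i\<in>I. if i = i0 then cnj a * \<phi> else 0)"
      by (rule sum.cong) (auto simp: w_def a_def)
    then show ?thesis using fin i0 by simp
  qed
  have swx: "(\<Sum>i\<in>I. cnj (w i) * x i) = cnj \<phi> * a"
  proof -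
    have "(\<Sum>i\<in>I. cnj (w i) * x i) = (\<Sum>i\<in>I. if i = i0 then cnj \<phi> * a else 0)"
      by (rule sum.cong) (auto simp: w_def a_def)
    then show ?thesis using fin i0 by simp
  qed
  have sww: "(\<Sum>i\<in>I. cnj (w i) * w i) = 1"
  proof -
    have "(\<Sum>i\<in>I. cnj (w i) * w i) = (\<Sum>i\<in>I. if i = i0 then cnj \<phi> * \<phi> else 0)"
      by (rule sum.cong) (auto simp: w_def)
    then show ?thesis using fin i0 ph1 by simp
  qed
  have s_eq: "s = of_real (2 - 2 * cmod a)"
  proof -
    have "s = (\<Sum>i\<in>I. cnj (x i) * x i - cnj (x i) * w i - cnj (w i) * x i + cnj (w i) * w i)"
      unfolding s_def u_def by (rule sum.cong) (auto simp: algebra_simps)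
    also have "\<dots> = 1 - cnj a * \<phi> - cnj \<phi> * a + 1"
      using unit sxw swx sww by (simp add: sum.distrib sum_subtractf)
    finally show ?thesis using ph2 ph3 by simp
  qed
  define \<kappa> where "\<kappa> = (if s = 0 then 0 else 2 / s)"
  have kreal: "cnj \<kappa> = \<kappa>" unfolding \<kappa>_def s_eq by simp
  have kk: "\<kappa> * (\<kappa> * s - 2) = 0" unfolding \<kappa>_def by auto
  define W where "W i j = idm i j - \<kappa> * u i * cnj (u j)" for i j
  have herm: "eqon I (adjm W) W"
    unfolding eqon_def adjm_def W_def idm_def using kreal by (auto simp: mult.commute mult.left_commute)
  have sq: "eqon I (mm I W W) idm"
    unfolding eqon_def
  proof (intro ballI)
    fix i j assume i: "i \<in> I" and j: "j \<in> I"
    have "mm I W W i j = (\<Sum>k\<in>I. idm i k * idm k j - \<kappa> * u i * cnj (u k) * idm k j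
        - idm i k * \<kappa> * u k * cnj (u j) + \<kappa> * \<kappa> * u i * cnj (u j) * (cnj (u k) * u k))"
      unfolding mm_def W_def by (rule sum.cong) (auto simp: algebra_simps)
    also have "\<dots> = idm i j - \<kappa> * u i * cnj (u j) - \<kappa> * u i * cnj (u j) + \<kappa> * \<kappa> * u i * cnj (u j) * s"
    proof -
      have e1: "(\<Sum>k\<in>I. idm i k * idm k j) = idm i j"
        using mm_idm_left[OF fin i, of idm j] unfolding mm_def .
      have e2: "(\<Sum>k\<in>I. \<kappa> * u i * cnj (u k) * idm k j) = \<kappa> * u i * cnj (u j)"
        using fin j by (simp add: idm_def if_distrib[of "\<lambda>x. _ * x"] cong: if_cong)
      have e3: "(\<Sum>k\<in>I. idm i k * \<kappa> * u k * cnj (u j)) = \<kappa> * u i * cnj (u j)"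
        using fin i by (simp add: idm_def if_distrib[of "\<lambda>x. x * _"] cong: if_cong)
      have e4: "(\<Sum>k\<in>I. \<kappa> * \<kappa> * u i * cnj (u j) * (cnj (u k) * u k)) = \<kappa> * \<kappa> * u i * cnj (u j) * s"
        unfolding s_def by (simp add: sum_distrib_left)
      show ?thesis using e1 e2 e3 e4 by (simp add: sum.distrib sum_subtractf)
    qed
    also have "\<dots> = idm i j + (\<kappa> * (\<kappa> * s - 2)) * u i * cnj (u j)"
      by (simp add: algebra_simps)
    also have "\<dots> = idm i j" using kk by simp
    finally show "mm I W W i j = idm i j" .
  qed
  have col: "\<forall>i\<in>I. W i i0 = cnj \<phi> * x i"
  proof
    fix i assume i: "i \<in> I"
    show "W i i0 = cnj \<phi> * x i"
    proof (cases "s = 0")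
      case True
      have "\<forall>k\<in>I. cnj (u k) * u k = 0"
      proof -
        have "s = (\<Sum>k\<in>I. of_real ((cmod (u k))^2))"
          unfolding s_def by (rule sum.cong) (simp_all only: cnj_self of_real_mult power2_eq_square)
        also have "\<dots> = of_real (\<Sum>k\<in>I. (cmod (u k))^2)" by simp
        finally have "s = of_real (\<Sum>k\<in>I. (cmod (u k))^2)" .
        then have "(\<Sum>k\<in>I. (cmod (u k))^2) = 0" using True by (metis of_real_eq_0_iff)
        then have "\<forall>k\<in>I. (cmod (u k))^2 = 0" using fin by (subst (asm) sum_nonneg_eq_0_iff) auto
        then show ?thesis by auto
      qed
      then have "u i = 0" using i by auto
      then have "x i = w i" unfolding u_def by simp
      then show ?thesis using True ph1 unfolding W_def \<kappa>_def idm_def w_def by auto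
    next
      case False
      have cu: "cnj (u i0) = - (s / 2) * cnj \<phi>"
      proof -
        have "\<phi> * cnj (u i0) = of_real (cmod a) - 1"
          unfolding u_def w_def a_def[symmetric] using ph2 ph1 by (simp add: algebra_simps)
        also have "\<dots> = - (s / 2)" unfolding s_eq by (simp add: field_simps)
        finally have "\<phi> * cnj (u i0) = - (s / 2)" .
        then have "cnj \<phi> * (\<phi> * cnj (u i0)) = - (s / 2) * cnj \<phi>" by (simp add: mult.commute)
        then show ?thesis using ph1 by (simp add: mult.assoc[symmetric])
      qed
      have "W i i0 = idm i i0 + cnj \<phi> * u i"
        unfolding W_def cu \<kappa>_def using False by (simp add: field_simps)
      also have "\<dots> = cnj \<phi> * x i"
        unfolding u_def w_def idm_def using ph1 by (auto simp: algebra_simps)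
      finally show ?thesis .
    qed
  qed
  have "cnj \<phi> \<noteq> 0" using ph1 by auto
  then show ?thesis using herm sq col by blast
qed

lemma eig_exists:
  fixes A :: "'a \<Rightarrow> 'a \<Rightarrow> complex"
  assumes fin: "finite I" and ne: "I \<noteq> {}"
  shows "\<exists>e x. (\<exists>i\<in>I. x i \<noteq> 0) \<and> (\<forall>i\<in>I. (\<Sum>j\<in>I. A i j * x j) = e * x i)"
proof -
  define n where "n = card I"
  obtain g where g: "bij_betw g {0..<n} I" using ex_bij_betw_nat_finite[OF fin] n_def by blast
  have n0: "n > 0" using fin ne n_def by (simp add: card_gt_0_iff)
  define M where "M = mat n n (\<lambda>(i,j). A (g i) (g j))"
  have Mc: "M \<in> carrier_mat n n" unfolding M_def by simp
  obtain as where as: "char_poly M = (\<Prod>a\<leftarrow>as. [:- a, 1:])" "length as = n"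
    using char_poly_factorized[OF Mc] by blast
  then obtain a as' where aa: "as = a # as'" using n0 by (cases as) auto
  have "poly (char_poly M) a = 0" unfolding as(1) aa by simp
  then have "eigenvalue M a" using eigenvalue_root_char_poly[OF Mc] by simp
  then obtain v where v: "eigenvector M v a" unfolding eigenvalue_def by blast
  then have vc: "v \<in> carrier_vec n" and v0: "v \<noteq> 0\<^sub>v n" and ev: "M *\<^sub>v v = a \<cdot>\<^sub>v v"
    using Mc unfolding eigenvector_def by auto
  define h where "h = inv_into {0..<n} g"
  define x where "x i = v $ h i" for i
  have hg: "\<And>p. p < n \<Longrightarrow> h (g p) = p" unfolding h_def using g
    by (simp add: bij_betw_def inv_into_f_f)
  have gh: "\<And>i. i \<in> I \<Longrightarrow> g (h i) = i" "\<And>i. i \<in> I \<Longrightarrow> h i < n" unfolding h_def using g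
    by (auto simp: bij_betw_def f_inv_into_f inv_into_into)
  have "\<exists>q<n. v $ q \<noteq> 0"
  proof (rule ccontr)
    assume "\<not> ?thesis"
    then have "v = 0\<^sub>v n" using vc by (intro eq_vecI) auto
    then show False using v0 by simp
  qed
  then obtain q where q: "q < n" "v $ q \<noteq> 0" by blast
  have "g q \<in> I" "x (g q) \<noteq> 0" using q g hg unfolding x_def by (auto simp: bij_betw_def)
  moreover have "\<forall>i\<in>I. (\<Sum>j\<in>I. A i j * x j) = a * x i"
  proof
    fix i assume i: "i \<in> I"
    have "(\<Sum>j\<in>I. A i j * x j) = (\<Sum>q\<in>{0..<n}. A i (g q) * x (g q))"
      using sum.reindex_bij_betw[OF g, of "\<lambda>j. A i j * x j"] by simp
    also have "\<dots> = (\<Sum>q\<in>{0..<n}. M $$ (h i, q) * v $ q)"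
      using gh[OF i] hg unfolding M_def x_def by (intro sum.cong) auto
    also have "\<dots> = (M *\<^sub>v v) $ h i"
      using Mc vc gh(2)[OF i] by (simp add: mult_mat_vec_def scalar_prod_def row_def)
    also have "\<dots> = a * x i" using ev gh(2)[OF i] vc unfolding x_def by simp
    finally show "(\<Sum>j\<in>I. A i j * x j) = a * x i" .
  qed
  ultimately show ?thesis by blast
qed


lemma herm_cnj: "eqon I (adjm A) A \<Longrightarrow> i \<in> I \<Longrightarrow> j \<in> I \<Longrightarrow> cnj (A i j) = A j i"
  unfolding eqon_def adjm_def by blast

lemma unit_eig:
  fixes A :: "'a \<Rightarrow> 'a \<Rightarrow> complex"
  assumes fin: "finite I" and ne: "I \<noteq> {}" and herm: "eqon I (adjm A) A"
  shows "\<exists>r x. (\<Sum>i\<in>I. cnj (x i) * x i) = 1 \<and> (\<forall>i\<in>I. (\<Sum>j\<in>I. A i j * x j) = of_real r * x i)"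
proof -
  obtain e x where x0: "\<exists>i\<in>I. x i \<noteq> 0" and ev: "\<forall>i\<in>I. (\<Sum>j\<in>I. A i j * x j) = e * x i"
    using eig_exists[OF fin ne] by blast
  define r where "r = (\<Sum>i\<in>I. (cmod (x i))^2)"
  have nn: "(\<Sum>i\<in>I. cnj (x i) * x i) = of_real r"
  proof -
    have "(\<Sum>i\<in>I. cnj (x i) * x i) = (\<Sum>i\<in>I. of_real ((cmod (x i))^2))"
      by (rule sum.cong) (simp_all only: cnj_self of_real_mult power2_eq_square)
    then show ?thesis unfolding r_def by simp
  qed
  have rpos: "r > 0"
  proof -
    obtain i where i: "i \<in> I" "x i \<noteq> 0" using x0 by blast
    have "(cmod (x i))^2 \<le> r" unfolding r_def using fin i
      by (intro member_le_sum) auto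
    moreover have "(cmod (x i))^2 > 0" using i by simp
    ultimately show ?thesis by linarith
  qed
  define q where "q = (\<Sum>i\<in>I. cnj (x i) * (\<Sum>j\<in>I. A i j * x j))"
  have "q = (\<Sum>i\<in>I. cnj (x i) * (e * x i))" unfolding q_def using ev by (intro sum.cong refl) simp
  also have "\<dots> = e * (\<Sum>i\<in>I. cnj (x i) * x i)" by (simp add: sum_distrib_left mult.left_commute)
  finally have q1: "q = e * of_real r" using nn by simp
  have q2: "cnj q = q"
  proof -
    have "cnj q = (\<Sum>i\<in>I. \<Sum>j\<in>I. x i * cnj (A i j) * cnj (x j))"
      unfolding q_def by (simp add: sum_distrib_left mult.assoc)
    also have "\<dots> = (\<Sum>i\<in>I. \<Sum>j\<in>I. x i * A j i * cnj (x j))"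
      using herm_cnj[OF herm] by (intro sum.cong refl) simp
    also have "\<dots> = (\<Sum>j\<in>I. \<Sum>i\<in>I. x i * A j i * cnj (x j))" by (rule sum.swap)
    also have "\<dots> = q" unfolding q_def
      by (rule sum.cong[OF refl], subst sum_distrib_left, rule sum.cong[OF refl], simp only: ac_simps)
    finally show ?thesis .
  qed
  have er: "e = of_real (Re e)"
  proof -
    have "cnj q = cnj e * of_real r" unfolding q1 by simp
    then have "cnj e * of_real r = e * of_real r" using q1 q2 by simp
    then have "(cnj e - e) * of_real r = 0" by (simp add: algebra_simps)
    then have "cnj e = e" using rpos by simp
    then show ?thesis by (simp add: complex_eq_iff)
  qed
  define y where "y i = x i / of_real (sqrt r)" for i
  have ss: "of_real (sqrt r) * of_real (sqrt r) = (of_real r :: complex)"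
    using rpos by (simp only: of_real_mult[symmetric]) simp
  have "(\<Sum>i\<in>I. cnj (y i) * y i) = (\<Sum>i\<in>I. cnj (x i) * x i / of_real r)"
  proof (rule sum.cong[OF refl])
    fix i
    have "cnj (y i) * y i = cnj (x i) * x i / (of_real (sqrt r) * of_real (sqrt r))"
      unfolding y_def by simp
    then show "cnj (y i) * y i = cnj (x i) * x i / of_real r" by (simp only: ss)
  qed
  also have "\<dots> = (\<Sum>i\<in>I. cnj (x i) * x i) / of_real r" by (simp add: sum_divide_distrib)
  also have "\<dots> = 1" using nn rpos by simp
  finally have yu: "(\<Sum>i\<in>I. cnj (y i) * y i) = 1" .
  have "\<forall>i\<in>I. (\<Sum>j\<in>I. A i j * y j) = of_real (Re e) * y i"
  proof
    fix i assume i: "i \<in> I"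
    have "(\<Sum>j\<in>I. A i j * y j) = (\<Sum>j\<in>I. A i j * x j) / of_real (sqrt r)"
      unfolding y_def by (simp add: sum_divide_distrib)
    also have "\<dots> = of_real (Re e) * y i" using ev i er unfolding y_def by simp
    finally show "(\<Sum>j\<in>I. A i j * y j) = of_real (Re e) * y i" .
  qed
  then show ?thesis using yu by blast
qed

lemma herm_mm_unitary:
  assumes fin: "finite I" and h: "eqon I (adjm W) W" and sq: "eqon I (mm I W W) idm"
  shows "eqon I (mm I (adjm W) W) idm" "eqon I (mm I W (adjm W)) idm"
  using mm_cong[OF h eqon_refl, of W] mm_cong[OF eqon_refl h, of W] sq
  by (auto intro: eqon_trans)

lemma mm_idm_left_eqon: "finite I \<Longrightarrow> eqon I X idm \<Longrightarrow> eqon I (mm I X B) B"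
  using mm_cong[of I X idm B B] mm_idm_left[of I] unfolding eqon_def by auto

lemma mm_idm_right_eqon: "finite I \<Longrightarrow> eqon I X idm \<Longrightarrow> eqon I (mm I B X) B"
  using mm_cong[of I B B X idm] mm_idm_right[of I] unfolding eqon_def by auto

lemma spectral:
  fixes A :: "'a \<Rightarrow> 'a \<Rightarrow> complex"
  assumes "finite I" "eqon I (adjm A) A"
  shows "\<exists>V lam. eqon I (mm I (adjm V) V) idm \<and> eqon I (mm I V (adjm V)) idm \<and>
     (\<forall>k\<in>I. \<forall>i\<in>I. (\<Sum>j\<in>I. A i j * V j k) = of_real (lam k) * V i k)"
  using assms
proof (induction I arbitrary: A rule: finite_induct)
  case empty
  then show ?case unfolding eqon_def by auto
next
  case (insert i0 F A)
  define I where "I = insert i0 F"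
  have fin: "finite I" and i0: "i0 \<in> I" and FI: "F \<subseteq> I" and i0F: "i0 \<notin> F"
    using insert unfolding I_def by auto
  have herm: "eqon I (adjm A) A" using insert unfolding I_def by simp
  obtain r x where xu: "(\<Sum>i\<in>I. cnj (x i) * x i) = 1"
    and xe: "\<forall>i\<in>I. (\<Sum>j\<in>I. A i j * x j) = of_real r * x i"
    using unit_eig[OF fin _ herm] i0 by blast
  obtain W c where Wh: "eqon I (adjm W) W" and Ws: "eqon I (mm I W W) idm"
    and Wc: "\<forall>i\<in>I. W i i0 = c * x i"
    using householder[OF fin i0 xu] by blast
  have WU1: "eqon I (mm I (adjm W) W) idm" and WU2: "eqon I (mm I W (adjm W)) idm"
    using herm_mm_unitary[OF fin Wh Ws] by auto
  define A' where "A' = mm I (adjm W) (mm I A W)"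
  have A'h: "eqon I (adjm A') A'"
  proof -
    have "adjm A' = mm I (mm I (adjm W) (adjm A)) W"
      unfolding A'_def adjm_mm by simp
    also have "\<dots> = mm I (adjm W) (mm I (adjm A) W)" using fin by (simp add: mm_assoc)
    finally show ?thesis unfolding A'_def using mm_cong[OF eqon_refl mm_cong[OF herm eqon_refl]] by simp
  qed
  have AW: "\<And>i. i \<in> I \<Longrightarrow> mm I A W i i0 = of_real r * W i i0"
  proof -
    fix i assume i: "i \<in> I"
    have "mm I A W i i0 = c * (\<Sum>j\<in>I. A i j * x j)"
      unfolding mm_def using Wc by (simp add: sum_distrib_left mult.left_commute)
    then show "mm I A W i i0 = of_real r * W i i0" using xe i Wc by simp
  qed
  have A'col: "\<And>i. i \<in> I \<Longrightarrow> A' i i0 = (if i = i0 then of_real r else 0)"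
  proof -
    fix i assume i: "i \<in> I"
    have "A' i i0 = (\<Sum>k\<in>I. adjm W i k * (of_real r * W k i0))"
      unfolding A'_def mm_def using AW[unfolded mm_def] by (intro sum.cong) auto
    also have "\<dots> = of_real r * mm I (adjm W) W i i0"
      unfolding mm_def by (simp add: sum_distrib_left mult.left_commute)
    also have "\<dots> = (if i = i0 then of_real r else 0)"
      using WU1 i i0 unfolding eqon_def idm_def by auto
    finally show "A' i i0 = (if i = i0 then of_real r else 0)" .
  qed
  have A'row: "\<And>j. j \<in> I \<Longrightarrow> A' i0 j = (if j = i0 then of_real r else 0)"
  proof -
    fix j assume j: "j \<in> I"
    have "A' i0 j = cnj (A' j i0)" using herm_cnj[OF A'h j i0] by (metis complex_cnj_cnj)
    then show "A' i0 j = (if j = i0 then of_real r else 0)" using A'col[OF j] by auto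
  qed
  obtain V' lam' where V'1: "eqon F (mm F (adjm V') V') idm" and V'2: "eqon F (mm F V' (adjm V')) idm"
    and V'e: "\<forall>k\<in>F. \<forall>i\<in>F. (\<Sum>j\<in>F. A' i j * V' j k) = of_real (lam' k) * V' i k"
    using insert.IH[of A'] eqon_subset[OF A'h FI] by blast
  define Q where "Q i k = (if i = i0 then (if k = i0 then 1 else 0) else if k = i0 then 0 else V' i k)" for i k
  define V where "V = mm I W Q"
  define lam where "lam = lam'(i0 := r)"
  have sumI: "\<And>f. (\<Sum>k\<in>I. f k) = f i0 + (\<Sum>k\<in>F. f k)"
    unfolding I_def using insert by simp
  have Q1: "eqon I (mm I (adjm Q) Q) idm"
    unfolding eqon_def
  proof (intro ballI)
    fix i j assume i: "i \<in> I" and j: "j \<in> I"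
    have "mm I (adjm Q) Q i j = cnj (Q i0 i) * Q i0 j + (\<Sum>k\<in>F. cnj (Q k i) * Q k j)"
      unfolding mm_def adjm_def by (rule sumI)
    also have "\<dots> = idm i j"
    proof (cases "i = i0")
      case True
      then show ?thesis unfolding Q_def idm_def using i0F by (auto intro!: sum.neutral)
    next
      case False
      then have iF: "i \<in> F" using i unfolding I_def by auto
      show ?thesis
      proof (cases "j = i0")
        case True
        then show ?thesis unfolding Q_def idm_def using i0F False by (auto intro!: sum.neutral)
      next
        case False2: False
        then have jF: "j \<in> F" using j unfolding I_def by auto
        have "(\<Sum>k\<in>F. cnj (Q k i) * Q k j) = mm F (adjm V') V' i j"
          unfolding mm_def adjm_def Q_def using False False2 i0F by (intro sum.cong) auto
        also have "\<dots> = idm i j" using V'1 iF jF unfolding eqon_def by auto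
        finally show ?thesis unfolding Q_def using False False2 by simp
      qed
    qed
    finally show "mm I (adjm Q) Q i j = idm i j" .
  qed
  have Q2: "eqon I (mm I Q (adjm Q)) idm"
    unfolding eqon_def
  proof (intro ballI)
    fix i j assume i: "i \<in> I" and j: "j \<in> I"
    have "mm I Q (adjm Q) i j = Q i i0 * cnj (Q j i0) + (\<Sum>k\<in>F. Q i k * cnj (Q j k))"
      unfolding mm_def adjm_def by (rule sumI)
    also have "\<dots> = idm i j"
    proof (cases "i = i0")
      case True
      then show ?thesis unfolding Q_def idm_def using i0F by (auto intro!: sum.neutral)
    next
      case False
      then have iF: "i \<in> F" using i unfolding I_def by auto
      show ?thesis
      proof (cases "j = i0")
        case True
        then show ?thesis unfolding Q_def idm_def using i0F False by (auto intro!: sum.neutral)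
      next
        case False2: False
        then have jF: "j \<in> F" using j unfolding I_def by auto
        have "(\<Sum>k\<in>F. Q i k * cnj (Q j k)) = mm F V' (adjm V') i j"
          unfolding mm_def adjm_def Q_def using False False2 i0F by (intro sum.cong) auto
        also have "\<dots> = idm i j" using V'2 iF jF unfolding eqon_def by auto
        finally show ?thesis unfolding Q_def using False False2 by simp
      qed
    qed
    finally show "mm I Q (adjm Q) i j = idm i j" .
  qed
  have QL: "\<And>i k. i \<in> I \<Longrightarrow> k \<in> I \<Longrightarrow> mm I A' Q i k = Q i k * of_real (lam k)"
  proof -
    fix i k assume i: "i \<in> I" and k: "k \<in> I"
    have "mm I A' Q i k = A' i i0 * Q i0 k + (\<Sum>j\<in>F. A' i j * Q j k)"
      unfolding mm_def by (rule sumI)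
    also have "\<dots> = Q i k * of_real (lam k)"
    proof (cases "k = i0")
      case True
      have "(\<Sum>j\<in>F. A' i j * Q j k) = 0" using True i0F unfolding Q_def by (intro sum.neutral) auto
      then show ?thesis using True A'col[OF i] unfolding Q_def lam_def by auto
    next
      case False
      then have kF: "k \<in> F" using k unfolding I_def by auto
      have s1: "(\<Sum>j\<in>F. A' i j * Q j k) = (\<Sum>j\<in>F. A' i j * V' j k)"
        unfolding Q_def using False i0F by (intro sum.cong) auto
      show ?thesis
      proof (cases "i = i0")
        case True
        have "(\<Sum>j\<in>F. A' i j * V' j k) = 0" using True A'row i0F FI by (intro sum.neutral) auto
        then show ?thesis using s1 True False unfolding Q_def by simp
      next
        case False2: False
        then have iF: "i \<in> F" using i unfolding I_def by auto
        have "(\<Sum>j\<in>F. A' i j * V' j k) = of_real (lam' k) * V' i k" using V'e kF iF by auto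
        then show ?thesis using s1 False False2 unfolding Q_def lam_def by simp
      qed
    qed
    finally show "mm I A' Q i k = Q i k * of_real (lam k)" .
  qed
  have VU1: "eqon I (mm I (adjm V) V) idm"
  proof -
    have "mm I (adjm V) V = mm I (adjm Q) (mm I (mm I (adjm W) W) Q)"
      unfolding V_def adjm_mm using fin by (simp add: mm_assoc)
    moreover have "eqon I (mm I (adjm Q) (mm I (mm I (adjm W) W) Q)) (mm I (adjm Q) Q)"
      by (rule mm_cong[OF eqon_refl mm_idm_left_eqon[OF fin WU1]])
    ultimately show ?thesis using Q1 by (auto intro: eqon_trans)
  qed
  have VU2: "eqon I (mm I V (adjm V)) idm"
  proof -
    have "mm I V (adjm V) = mm I W (mm I (mm I Q (adjm Q)) (adjm W))"
      unfolding V_def adjm_mm using fin by (simp add: mm_assoc)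
    moreover have "eqon I (mm I W (mm I (mm I Q (adjm Q)) (adjm W))) (mm I W (adjm W))"
      by (rule mm_cong[OF eqon_refl mm_idm_left_eqon[OF fin Q2]])
    ultimately show ?thesis using WU2 by (auto intro: eqon_trans)
  qed
  have AWeq: "eqon I (mm I A W) (mm I W A')"
  proof -
    have "mm I W A' = mm I (mm I W (adjm W)) (mm I A W)"
      unfolding A'_def using fin by (simp add: mm_assoc)
    then show ?thesis using mm_idm_left_eqon[OF fin WU2, of "mm I A W"] by (simp add: eqon_sym)
  qed
  have VE: "\<forall>k\<in>I. \<forall>i\<in>I. (\<Sum>j\<in>I. A i j * V j k) = of_real (lam k) * V i k"
  proof (intro ballI)
    fix k i assume k: "k \<in> I" and i: "i \<in> I"
    have "(\<Sum>j\<in>I. A i j * V j k) = mm I (mm I A W) Q i k"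
      unfolding V_def using fin by (simp add: mm_assoc) (simp add: mm_def)
    also have "\<dots> = mm I (mm I W A') Q i k"
      by (rule mm_cong_pt[OF AWeq eqon_refl i k])
    also have "\<dots> = mm I W (mm I A' Q) i k" using fin by (simp add: mm_assoc)
    also have "\<dots> = (\<Sum>j\<in>I. W i j * (Q j k * of_real (lam k)))"
      unfolding mm_def using QL k by (intro sum.cong) (auto simp: mm_def)
    also have "\<dots> = of_real (lam k) * V i k"
      unfolding V_def mm_def by (simp add: sum_distrib_left mult.commute mult.left_commute)
    finally show "(\<Sum>j\<in>I. A i j * V j k) = of_real (lam k) * V i k" .
  qed
  show ?case using VU1 VU2 VE unfolding I_def by blast
qed


definition isdiag :: "nat \<Rightarrow> fop \<Rightarrow> (nat set \<Rightarrow> complex) \<Rightarrow> bool" where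
  "isdiag M A f \<longleftrightarrow> (\<forall>T S. S \<in> Pow {0..<M} \<longrightarrow> A T S = (if T = S then f S else 0))"

lemma isdiag_mult:
  assumes "isdiag M A f" "isdiag M B g"
  shows "isdiag M (op_mult M A B) (\<lambda>S. f S * g S)"
  unfolding isdiag_def
proof (intro allI impI)
  fix T S assume S: "S \<in> Pow {0..<M}"
  have "op_mult M A B T S = (\<Sum>R\<in>Pow {0..<M}. A T R * (if R = S then g S else 0))"
    unfolding op_mult_def using assms(2) S unfolding isdiag_def by (intro sum.cong) auto
  also have "\<dots> = A T S * g S" using S by (simp add: if_distrib[of "\<lambda>x. _ * x"] cong: if_cong)
  also have "\<dots> = (if T = S then f S * g S else 0)" using assms(1) S unfolding isdiag_def by auto
  finally show "op_mult M A B T S = (if T = S then f S * g S else 0)" .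
qed

lemma isdiag_add: "isdiag M A f \<Longrightarrow> isdiag M B g \<Longrightarrow> isdiag M (op_add A B) (\<lambda>S. f S + g S)"
  unfolding isdiag_def op_add_def by auto

lemma isdiag_smult: "isdiag M A f \<Longrightarrow> isdiag M (op_smult c A) (\<lambda>S. c * f S)"
  unfolding isdiag_def op_smult_def by auto

lemma isdiag_id: "isdiag M op_id (\<lambda>S. 1)"
  unfolding isdiag_def op_id_def by auto

lemma isdiag_sum: "(\<And>i. i \<in> I \<Longrightarrow> isdiag M (F i) (f i)) \<Longrightarrow> isdiag M (op_sum F I) (\<lambda>S. \<Sum>i\<in>I. f i S)"
  unfolding isdiag_def op_sum_def
proof (intro allI impI)
  fix T S assume "\<And>i. i \<in> I \<Longrightarrow> \<forall>T S. S \<in> Pow {0..<M} \<longrightarrow> F i T S = (if T = S then f i S else 0)"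
    and S: "S \<in> Pow {0..<M}"
  then have "\<And>i. i \<in> I \<Longrightarrow> F i T S = (if T = S then f i S else 0)" by blast
  then show "(\<Sum>i\<in>I. F i T S) = (if T = S then \<Sum>i\<in>I. f i S else 0)"
    by (cases "T = S") auto
qed

lemma ann_nz: "ann m T S \<noteq> 0 \<Longrightarrow> m \<in> S \<and> T = S - {m}"
  unfolding ann_def by (auto split: if_splits)

lemma cmod_ann: "cmod (ann m T S) \<le> (if m \<in> S \<and> T = S - {m} then 1 else 0)"
  unfolding ann_def by (auto simp: norm_power)

lemma cre_nz: "cre m T S \<noteq> 0 \<Longrightarrow> m \<in> T \<and> S = T - {m}"
  unfolding cre_def using ann_nz by fastforce

lemma cmod_cre: "cmod (cre m T S) \<le> (if m \<in> T \<and> S = T - {m} then 1 else 0)"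
  unfolding cre_def using cmod_ann[of m S T] by simp

lemma num_diag: "isdiag M (op_mult M (cre m) (ann m)) (\<lambda>S. if m \<in> S then 1 else 0)"
  unfolding isdiag_def
proof (intro allI impI)
  fix T S assume S: "S \<in> Pow {0..<M}"
  have "op_mult M (cre m) (ann m) T S = (\<Sum>R\<in>Pow {0..<M}. if R = S - {m} then cre m T R * ann m R S else 0)"
    unfolding op_mult_def by (intro sum.cong) (auto dest: ann_nz)
  also have "\<dots> = (if S - {m} \<in> Pow {0..<M} then cre m T (S - {m}) * ann m (S - {m}) S else 0)"
    by simp
  also have "\<dots> = cre m T (S - {m}) * ann m (S - {m}) S" using S by auto
  also have "\<dots> = (if T = S then (if m \<in> S then 1 else 0) else 0)"
  proof (cases "m \<in> S")
    case True
    have a: "ann m (S - {m}) S = (-1) ^ card {k \<in> S. k < m}" using True unfolding ann_def by simp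
    show ?thesis
    proof (cases "T = S")
      case True2: True
      have "cre m T (S - {m}) * ann m (S - {m}) S = cnj ((-1) ^ card {k \<in> S. k < m}) * (-1) ^ card {k \<in> S. k < m}"
        unfolding cre_def a True2 ..
      also have "\<dots> = 1" by (simp add: power_mult_distrib[symmetric])
      finally show ?thesis using True True2 by simp
    next
      case False
      have "cre m T (S - {m}) = 0"
      proof (rule ccontr)
        assume "cre m T (S - {m}) \<noteq> 0"
        then have "m \<in> T" "S - {m} = T - {m}" using cre_nz by blast+
        then have "T = S" using True by blast
        then show False using False by simp
      qed
      then show ?thesis using False by simp
    qed
  next
    case False
    then show ?thesis unfolding ann_def by simp
  qed
  finally show "op_mult M (cre m) (ann m) T S = (if T = S then (if m \<in> S then 1 else 0) else 0)" .
qed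


definition np :: "nat \<Rightarrow> fop \<Rightarrow> bool" where
  "np M A \<longleftrightarrow> (\<forall>T S. T \<in> Pow {0..<M} \<longrightarrow> S \<in> Pow {0..<M} \<longrightarrow> card T \<noteq> card S \<longrightarrow> A T S = 0)"
definition hermf :: "nat \<Rightarrow> fop \<Rightarrow> bool" where
  "hermf M A \<longleftrightarrow> (\<forall>T S. T \<in> Pow {0..<M} \<longrightarrow> S \<in> Pow {0..<M} \<longrightarrow> cnj (A T S) = A S T)"
definition rowb :: "nat \<Rightarrow> fop \<Rightarrow> real \<Rightarrow> bool" where
  "rowb M A c \<longleftrightarrow> (\<forall>T \<in> Pow {0..<M}. (\<Sum>S\<in>Pow {0..<M}. cmod (A T S)) \<le> c)"
definition colb :: "nat \<Rightarrow> fop \<Rightarrow> real \<Rightarrow> bool" where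
  "colb M A c \<longleftrightarrow> (\<forall>S \<in> Pow {0..<M}. (\<Sum>T\<in>Pow {0..<M}. cmod (A T S)) \<le> c)"

lemma np_diag: "isdiag M A f \<Longrightarrow> np M A"
  unfolding isdiag_def np_def by auto
lemma np_add: "np M A \<Longrightarrow> np M B \<Longrightarrow> np M (op_add A B)"
  unfolding np_def op_add_def by auto
lemma np_smult: "np M A \<Longrightarrow> np M (op_smult c A)"
  unfolding np_def op_smult_def by auto
lemma np_sum: "(\<And>i. i \<in> I \<Longrightarrow> np M (F i)) \<Longrightarrow> np M (op_sum F I)"
  unfolding np_def op_sum_def by (auto intro!: sum.neutral)

lemma np_hop: "np M (op_mult M (cre a) (ann b))"
  unfolding np_def op_mult_def
proof (intro allI impI sum.neutral ballI)
  fix T S R assume T: "T \<in> Pow {0..<M}" and S: "S \<in> Pow {0..<M}" and c: "card T \<noteq> card S"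
  show "cre a T R * ann b R S = 0"
  proof (rule ccontr)
    assume "cre a T R * ann b R S \<noteq> 0"
    then have "cre a T R \<noteq> 0" "ann b R S \<noteq> 0" by auto
    then have h: "a \<in> T" "R = T - {a}" "b \<in> S" "R = S - {b}" using cre_nz ann_nz by blast+
    have fT: "finite T" "finite S" using T S finite_subset by auto
    have "card R = card T - 1" unfolding h(2) using h(1) fT(1) by simp
    moreover have "card R = card S - 1" unfolding h(4) using h(3) fT(2) by simp
    moreover have "card T > 0" using h(1) fT(1) card_gt_0_iff by blast
    moreover have "card S > 0" using h(3) fT(2) card_gt_0_iff by blast
    ultimately show False using c by linarith
  qed
qed

lemma herm_diag: "isdiag M A f \<Longrightarrow> (\<And>S. cnj (f S) = f S) \<Longrightarrow> hermf M A"
  unfolding isdiag_def hermf_def by auto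
lemma herm_add: "hermf M A \<Longrightarrow> hermf M B \<Longrightarrow> hermf M (op_add A B)"
  unfolding hermf_def op_add_def by auto
lemma herm_smult: "hermf M A \<Longrightarrow> cnj c = c \<Longrightarrow> hermf M (op_smult c A)"
  unfolding hermf_def op_smult_def by auto
lemma herm_sum: "(\<And>i. i \<in> I \<Longrightarrow> hermf M (F i)) \<Longrightarrow> hermf M (op_sum F I)"
  unfolding hermf_def op_sum_def by auto

lemma cnj_hop: "cnj (op_mult M (cre a) (ann b) T S) = op_mult M (cre b) (ann a) S T"
  unfolding op_mult_def cre_def by (simp add: mult.commute)

lemma sum_offdiag_swap:
  assumes "finite B"
  shows "(\<Sum>x\<in>B. \<Sum>y\<in>B - {x}. g y x) = (\<Sum>x\<in>B. \<Sum>y\<in>B - {x}. (g x y :: complex))"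
proof -
  have "(\<Sum>x\<in>B. \<Sum>y\<in>B - {x}. g y x) = (\<Sum>x\<in>B. \<Sum>y\<in>{y \<in> B. x \<noteq> y}. g y x)"
    by (intro sum.cong) auto
  also have "\<dots> = (\<Sum>y\<in>B. \<Sum>x\<in>{x \<in> B. x \<noteq> y}. g y x)" by (rule sum.swap_restrict[OF assms assms])
  also have "\<dots> = (\<Sum>y\<in>B. \<Sum>x\<in>B - {y}. g y x)" by (intro sum.cong) auto
  finally show ?thesis .
qed

lemma hopping_herm: "hermf (nmodes L d) (hopping L d t)"
  unfolding hermf_def
proof (intro allI impI)
  fix T S
  let ?M = "nmodes L d"
  have fb: "\<And>B. B \<in> bonds L d \<Longrightarrow> finite B" unfolding bonds_def by auto
  have "cnj (hopping L d t T S) = - complex_of_real t * (\<Sum>B\<in>bonds L d. \<Sum>\<sigma>\<in>{Up, Dn}. \<Sum>x\<in>B. \<Sum>y\<in>B - {x}.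
         op_mult ?M (cre (mode y \<sigma>)) (ann (mode x \<sigma>)) S T)"
    unfolding hopping_def op_smult_def op_sum_def by (simp add: cnj_hop)
  also have "\<dots> = - complex_of_real t * (\<Sum>B\<in>bonds L d. \<Sum>\<sigma>\<in>{Up, Dn}. \<Sum>x\<in>B. \<Sum>y\<in>B - {x}.
         op_mult ?M (cre (mode x \<sigma>)) (ann (mode y \<sigma>)) S T)"
    using fb by (intro arg_cong2[where f="(*)"] refl sum.cong sum_offdiag_swap) auto
  also have "\<dots> = hopping L d t S T"
    unfolding hopping_def op_smult_def op_sum_def ..
  finally show "cnj (hopping L d t T S) = hopping L d t S T" .
qed

lemma hopping_np: "np (nmodes L d) (hopping L d t)"
  unfolding hopping_def by (intro np_smult np_sum np_hop)

lemma sum_ind_le1: "(\<Sum>S\<in>A. (if S = X then 1 else 0 :: real)) \<le> 1"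
  by (cases "finite A") (auto simp: sum.delta)

lemma cmod_ann2: "cmod (ann m T S) \<le> (if S = insert m T then 1 else 0)"
proof (cases "m \<in> S \<and> T = S - {m}")
  case True
  then have "S = insert m T" by blast
  then show ?thesis using cmod_ann[of m T S] True by simp
next
  case False
  then have "ann m T S = 0" unfolding ann_def by auto
  then show ?thesis by simp
qed
lemma cmod_ann_le1: "cmod (ann m T S) \<le> 1"
  using cmod_ann[of m T S] by (auto split: if_splits)
lemma cmod_ann3: "cmod (ann m T S) \<le> (if T = S - {m} then 1 else 0)"
proof (cases "T = S - {m}")
  case False
  then have "ann m T S = 0" unfolding ann_def by auto
  then show ?thesis by simp
qed (use cmod_ann_le1 in auto)
lemma cmod_cre2: "cmod (cre m T S) \<le> (if S = T - {m} then 1 else 0)"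
  unfolding cre_def using cmod_ann3[of m S T] by simp
lemma cmod_cre3: "cmod (cre m T S) \<le> (if T = insert m S then 1 else 0)"
  unfolding cre_def using cmod_ann2[of m S T] by simp

lemma rowb_hop: "rowb M (op_mult M (cre a) (ann b)) 1"
  unfolding rowb_def
proof
  fix T assume T: "T \<in> Pow {0..<M}"
  let ?P = "Pow {0..<M}"
  have "(\<Sum>S\<in>?P. cmod (op_mult M (cre a) (ann b) T S)) \<le> (\<Sum>S\<in>?P. \<Sum>R\<in>?P. cmod (cre a T R) * cmod (ann b R S))"
    unfolding op_mult_def by (intro sum_mono) (auto intro: order_trans[OF norm_sum] simp: norm_mult)
  also have "\<dots> = (\<Sum>R\<in>?P. cmod (cre a T R) * (\<Sum>S\<in>?P. cmod (ann b R S)))"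
    by (subst sum.swap) (simp add: sum_distrib_left)
  also have "\<dots> \<le> (\<Sum>R\<in>?P. cmod (cre a T R))"
  proof (intro sum_mono mult_right_le_one_le)
    fix R
    have "(\<Sum>S\<in>?P. cmod (ann b R S)) \<le> (\<Sum>S\<in>?P. (if S = insert b R then 1 else 0))"
      by (intro sum_mono cmod_ann2)
    then show "(\<Sum>S\<in>?P. cmod (ann b R S)) \<le> 1" by (rule order_trans[OF _ sum_ind_le1])
  qed (auto intro: sum_nonneg)
  also have "\<dots> \<le> (\<Sum>R\<in>?P. (if R = T - {a} then 1 else 0))"
    by (intro sum_mono cmod_cre2)
  also have "\<dots> \<le> 1" by (rule sum_ind_le1)
  finally show "(\<Sum>S\<in>?P. cmod (op_mult M (cre a) (ann b) T S)) \<le> 1" .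
qed

lemma colb_hop: "colb M (op_mult M (cre a) (ann b)) 1"
  unfolding colb_def
proof
  fix S assume S: "S \<in> Pow {0..<M}"
  let ?P = "Pow {0..<M}"
  have "(\<Sum>T\<in>?P. cmod (op_mult M (cre a) (ann b) T S)) \<le> (\<Sum>T\<in>?P. \<Sum>R\<in>?P. cmod (cre a T R) * cmod (ann b R S))"
    unfolding op_mult_def by (intro sum_mono) (auto intro: order_trans[OF norm_sum] simp: norm_mult)
  also have "\<dots> = (\<Sum>R\<in>?P. cmod (ann b R S) * (\<Sum>T\<in>?P. cmod (cre a T R)))"
    by (subst sum.swap) (simp add: sum_distrib_left mult.commute)
  also have "\<dots> \<le> (\<Sum>R\<in>?P. cmod (ann b R S))"
  proof (intro sum_mono mult_right_le_one_le)
    fix R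
    have "(\<Sum>T\<in>?P. cmod (cre a T R)) \<le> (\<Sum>T\<in>?P. (if T = insert a R then 1 else 0))"
      by (intro sum_mono cmod_cre3)
    then show "(\<Sum>T\<in>?P. cmod (cre a T R)) \<le> 1" by (rule order_trans[OF _ sum_ind_le1])
  qed (auto intro: sum_nonneg)
  also have "\<dots> \<le> (\<Sum>R\<in>?P. (if R = S - {b} then 1 else 0))"
    by (intro sum_mono cmod_ann3)
  also have "\<dots> \<le> 1" by (rule sum_ind_le1)
  finally show "(\<Sum>T\<in>?P. cmod (op_mult M (cre a) (ann b) T S)) \<le> 1" .
qed

lemma rowb_add: "rowb M A a \<Longrightarrow> rowb M B b \<Longrightarrow> rowb M (op_add A B) (a + b)"
  unfolding rowb_def op_add_def
  by (auto intro!: order_trans[OF sum_mono[OF norm_triangle_ineq]] add_mono simp: sum.distrib)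
lemma colb_add: "colb M A a \<Longrightarrow> colb M B b \<Longrightarrow> colb M (op_add A B) (a + b)"
  unfolding colb_def op_add_def
  by (auto intro!: order_trans[OF sum_mono[OF norm_triangle_ineq]] add_mono simp: sum.distrib)
lemma rowb_smult: "rowb M A a \<Longrightarrow> rowb M (op_smult c A) (cmod c * a)"
  unfolding rowb_def op_smult_def by (auto simp: norm_mult sum_distrib_left[symmetric] intro!: mult_left_mono)
lemma colb_smult: "colb M A a \<Longrightarrow> colb M (op_smult c A) (cmod c * a)"
  unfolding colb_def op_smult_def by (auto simp: norm_mult sum_distrib_left[symmetric] intro!: mult_left_mono)
lemma rowb_sum: "finite I \<Longrightarrow> (\<And>i. i \<in> I \<Longrightarrow> rowb M (F i) (a i)) \<Longrightarrow> rowb M (op_sum F I) (\<Sum>i\<in>I. a i)"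
  unfolding rowb_def op_sum_def
proof (intro ballI)
  fix T assume fin: "finite I" and h: "\<And>i. i \<in> I \<Longrightarrow> \<forall>T\<in>Pow {0..<M}. (\<Sum>S\<in>Pow {0..<M}. cmod (F i T S)) \<le> a i"
    and T: "T \<in> Pow {0..<M}"
  have "(\<Sum>S\<in>Pow {0..<M}. cmod (\<Sum>i\<in>I. F i T S)) \<le> (\<Sum>S\<in>Pow {0..<M}. \<Sum>i\<in>I. cmod (F i T S))"
    by (intro sum_mono norm_sum)
  also have "\<dots> = (\<Sum>i\<in>I. \<Sum>S\<in>Pow {0..<M}. cmod (F i T S))" by (rule sum.swap)
  also have "\<dots> \<le> (\<Sum>i\<in>I. a i)" using h T by (intro sum_mono) auto
  finally show "(\<Sum>S\<in>Pow {0..<M}. cmod (\<Sum>i\<in>I. F i T S)) \<le> (\<Sum>i\<in>I. a i)" .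
qed
lemma colb_sum: "finite I \<Longrightarrow> (\<And>i. i \<in> I \<Longrightarrow> colb M (F i) (a i)) \<Longrightarrow> colb M (op_sum F I) (\<Sum>i\<in>I. a i)"
  unfolding colb_def op_sum_def
proof (intro ballI)
  fix S assume fin: "finite I" and h: "\<And>i. i \<in> I \<Longrightarrow> \<forall>S\<in>Pow {0..<M}. (\<Sum>T\<in>Pow {0..<M}. cmod (F i T S)) \<le> a i"
    and S: "S \<in> Pow {0..<M}"
  have "(\<Sum>T\<in>Pow {0..<M}. cmod (\<Sum>i\<in>I. F i T S)) \<le> (\<Sum>T\<in>Pow {0..<M}. \<Sum>i\<in>I. cmod (F i T S))"
    by (intro sum_mono norm_sum)
  also have "\<dots> = (\<Sum>i\<in>I. \<Sum>T\<in>Pow {0..<M}. cmod (F i T S))" by (rule sum.swap)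
  also have "\<dots> \<le> (\<Sum>i\<in>I. a i)" using h S by (intro sum_mono) auto
  finally show "(\<Sum>T\<in>Pow {0..<M}. cmod (\<Sum>i\<in>I. F i T S)) \<le> (\<Sum>i\<in>I. a i)" .
qed

lemma bonds_image: "bonds L d = (\<lambda>(s, i). {s, shift L s i}) ` (sites L d \<times> {..<d})"
proof (rule Set.set_eqI, rule iffI)
  fix x assume "x \<in> bonds L d"
  then obtain s i where h: "x = {s, shift L s i}" "s \<in> sites L d" "i < d" unfolding bonds_def by blast
  show "x \<in> (\<lambda>(s, i). {s, shift L s i}) ` (sites L d \<times> {..<d})"
    by (rule image_eqI[of _ _ "(s, i)"]) (use h in auto)
next
  fix x assume "x \<in> (\<lambda>(s, i). {s, shift L s i}) ` (sites L d \<times> {..<d})"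
  then obtain p where p: "p \<in> sites L d \<times> {..<d}" "x = (\<lambda>(s, i). {s, shift L s i}) p" by blast
  obtain s i where "p = (s, i)" by (cases p)
  then have h: "x = {s, shift L s i}" "s \<in> sites L d" "i < d" using p by auto
  then show "x \<in> bonds L d" unfolding bonds_def by blast
qed

lemma finite_bonds: "finite (bonds L d)"
  unfolding bonds_image sites_def by auto

lemma card_bonds: "card (bonds L d) \<le> L ^ d * d"
proof -
  have "card (bonds L d) \<le> card (sites L d \<times> {..<d})"
    unfolding bonds_image by (rule card_image_le) (auto simp: sites_def)
  also have "\<dots> = L ^ d * d" by (simp add: sites_def card_cartesian_product)
  finally show ?thesis .
qed

lemma bond_count: "B \<in> bonds L d \<Longrightarrow> (\<Sum>\<sigma>\<in>{Up, Dn}. \<Sum>x\<in>B. \<Sum>y\<in>B - {x}. (1::real)) \<le> 4"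
proof -
  assume "B \<in> bonds L d"
  then obtain s s' where B: "B = {s, s'}" unfolding bonds_def by auto
  have "(\<Sum>x\<in>B. \<Sum>y\<in>B - {x}. (1::real)) \<le> 2"
    unfolding B by (cases "s = s'") auto
  then show ?thesis by simp
qed

lemma hopping_rowb: "rowb (nmodes L d) (hopping L d t) (4 * \<bar>t\<bar> * real (L ^ d * d))"
proof -
  define X where "X = (\<Sum>B\<in>bonds L d. \<Sum>\<sigma>\<in>{Up, Dn}. \<Sum>x\<in>B. \<Sum>y\<in>B - {x}. (1::real))"
  have r: "rowb (nmodes L d) (hopping L d t) (cmod (- complex_of_real t) * X)"
    unfolding hopping_def X_def
    by (intro rowb_smult rowb_sum rowb_hop finite_bonds) (auto simp: bonds_image)
  have "X \<le> (\<Sum>B\<in>bonds L d. 4)" unfolding X_def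
    by (intro sum_mono bond_count)
  also have "\<dots> = 4 * real (card (bonds L d))" by simp
  also have "\<dots> \<le> 4 * real (L ^ d * d)"
  proof -
    have "real (card (bonds L d)) \<le> real (L ^ d * d)" using card_bonds[of L d] by (simp only: of_nat_le_iff)
    then show ?thesis by simp
  qed
  finally have Xle: "X \<le> 4 * real (L ^ d * d)" .
  have "cmod (- complex_of_real t) * X \<le> \<bar>t\<bar> * (4 * real (L ^ d * d))"
    using Xle by (simp add: mult_left_mono)
  also have "\<dots> = 4 * \<bar>t\<bar> * real (L ^ d * d)" by (simp only: ac_simps)
  finally have le: "cmod (- complex_of_real t) * X \<le> 4 * \<bar>t\<bar> * real (L ^ d * d)" .
  show ?thesis using r le unfolding rowb_def by (meson order_trans)
qed

lemma hopping_colb: "colb (nmodes L d) (hopping L d t) (4 * \<bar>t\<bar> * real (L ^ d * d))"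
proof -
  define X where "X = (\<Sum>B\<in>bonds L d. \<Sum>\<sigma>\<in>{Up, Dn}. \<Sum>x\<in>B. \<Sum>y\<in>B - {x}. (1::real))"
  have r: "colb (nmodes L d) (hopping L d t) (cmod (- complex_of_real t) * X)"
    unfolding hopping_def X_def
    by (intro colb_smult colb_sum colb_hop finite_bonds) (auto simp: bonds_image)
  have "X \<le> (\<Sum>B\<in>bonds L d. 4)" unfolding X_def
    by (intro sum_mono bond_count)
  also have "\<dots> = 4 * real (card (bonds L d))" by simp
  also have "\<dots> \<le> 4 * real (L ^ d * d)"
  proof -
    have "real (card (bonds L d)) \<le> real (L ^ d * d)" using card_bonds[of L d] by (simp only: of_nat_le_iff)
    then show ?thesis by simp
  qed
  finally have Xle: "X \<le> 4 * real (L ^ d * d)" .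
  have "cmod (- complex_of_real t) * X \<le> \<bar>t\<bar> * (4 * real (L ^ d * d))"
    using Xle by (simp add: mult_left_mono)
  also have "\<dots> = 4 * \<bar>t\<bar> * real (L ^ d * d)" by (simp only: ac_simps)
  finally have le: "cmod (- complex_of_real t) * X \<le> 4 * \<bar>t\<bar> * real (L ^ d * d)" .
  show ?thesis using r le unfolding colb_def by (meson order_trans)
qed


lemma exp_sums_complex: "(\<lambda>n. (x::complex)^n / of_nat (fact n)) sums exp x"
proof -
  have "(\<lambda>n. x^n /\<^sub>R fact n) = (\<lambda>n. x^n / of_nat (fact n))"
    by (rule ext) (simp add: scaleR_conv_of_real divide_inverse mult.commute)
  then show ?thesis using exp_converges[of x] by simp
qed

lemma pow_formula:
  fixes X :: fop and V :: "nat set \<Rightarrow> nat set \<Rightarrow> complex"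
  assumes npX: "np M X" and HS: "HS = {S \<in> Pow {0..<M}. card S = N}"
    and U2: "eqon HS (mm HS V (adjm V)) idm"
    and E: "\<forall>k\<in>HS. \<forall>i\<in>HS. (\<Sum>j\<in>HS. X i j * V j k) = mu k * V i k"
  shows "\<forall>T\<in>HS. \<forall>S\<in>HS. op_pow M X n T S = (\<Sum>k\<in>HS. mu k ^ n * V T k * cnj (V S k))"
proof (induction n)
  case 0
  show ?case
  proof (intro ballI)
    fix T S assume T: "T \<in> HS" and S: "S \<in> HS"
    have "op_pow M X 0 T S = idm T S" by (simp add: op_id_def idm_def)
    also have "\<dots> = mm HS V (adjm V) T S" using U2 T S unfolding eqon_def by auto
    also have "\<dots> = (\<Sum>k\<in>HS. mu k ^ 0 * V T k * cnj (V S k))" unfolding mm_def adjm_def by simp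
    finally show "op_pow M X 0 T S = (\<Sum>k\<in>HS. mu k ^ 0 * V T k * cnj (V S k))" .
  qed
next
  case (Suc n)
  have finHS: "finite HS" unfolding HS by simp
  show ?case
  proof (intro ballI)
    fix T S assume T: "T \<in> HS" and S: "S \<in> HS"
    have "op_pow M X (Suc n) T S = (\<Sum>R\<in>Pow {0..<M}. X T R * op_pow M X n R S)"
      by (simp add: op_mult_def)
    also have "\<dots> = (\<Sum>R\<in>HS. X T R * op_pow M X n R S)"
    proof (rule sum.mono_neutral_right)
      show "finite (Pow {0..<M})" by simp
      show "HS \<subseteq> Pow {0..<M}" unfolding HS by auto
      show "\<forall>R\<in>Pow {0..<M} - HS. X T R * op_pow M X n R S = 0"
      proof
        fix R assume R: "R \<in> Pow {0..<M} - HS"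
        have "card T \<noteq> card R" "T \<in> Pow {0..<M}" "R \<in> Pow {0..<M}" using R T unfolding HS by auto
        then have "X T R = 0" using npX unfolding np_def by blast
        then show "X T R * op_pow M X n R S = 0" by simp
      qed
    qed
    also have "\<dots> = (\<Sum>R\<in>HS. X T R * (\<Sum>k\<in>HS. mu k ^ n * V R k * cnj (V S k)))"
      using Suc.IH S by (intro sum.cong) auto
    also have "\<dots> = (\<Sum>k\<in>HS. mu k ^ n * (\<Sum>R\<in>HS. X T R * V R k) * cnj (V S k))"
      by (simp add: sum_distrib_left sum_distrib_right mult_ac) (rule sum.swap)
    also have "\<dots> = (\<Sum>k\<in>HS. mu k ^ Suc n * V T k * cnj (V S k))"
      using E T by (intro sum.cong) (auto simp: mult_ac)
    finally show "op_pow M X (Suc n) T S = (\<Sum>k\<in>HS. mu k ^ Suc n * V T k * cnj (V S k))" .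
  qed
qed

lemma exp_formula:
  fixes X :: fop and V :: "nat set \<Rightarrow> nat set \<Rightarrow> complex"
  assumes npX: "np M X" and HS: "HS = {S \<in> Pow {0..<M}. card S = N}"
    and U2: "eqon HS (mm HS V (adjm V)) idm"
    and E: "\<forall>k\<in>HS. \<forall>i\<in>HS. (\<Sum>j\<in>HS. X i j * V j k) = mu k * V i k"
    and T: "T \<in> HS" and S: "S \<in> HS"
  shows "op_exp M X T S = (\<Sum>k\<in>HS. exp (mu k) * (V T k * cnj (V S k)))"
proof -
  have pf: "\<And>n. op_pow M X n T S = (\<Sum>k\<in>HS. mu k ^ n * V T k * cnj (V S k))"
    using pow_formula[OF npX HS U2 E] T S by blast
  have "(\<lambda>n. op_pow M X n T S / of_nat (fact n)) = (\<lambda>n. \<Sum>k\<in>HS. mu k ^ n / of_nat (fact n) * (V T k * cnj (V S k)))"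
    by (rule ext) (simp add: pf sum_divide_distrib mult_ac)
  moreover have "(\<lambda>n. \<Sum>k\<in>HS. mu k ^ n / of_nat (fact n) * (V T k * cnj (V S k))) sums (\<Sum>k\<in>HS. exp (mu k) * (V T k * cnj (V S k)))"
    by (intro sums_sum sums_mult2 exp_sums_complex)
  ultimately show ?thesis unfolding op_exp_def by (simp add: sums_unique[symmetric])
qed




lemma x_le_exp_half: "(x::real) \<ge> 0 \<Longrightarrow> x \<le> exp (x / 2)"
proof -
  assume x: "x \<ge> 0"
  have a: "1 + x / 4 \<le> exp (x / 4)" by (rule exp_ge_add_one_self)
  have "exp (x / 2) = exp (x / 4) * exp (x / 4)" by (simp add: exp_add[symmetric])
  also have "\<dots> \<ge> (1 + x / 4) * (1 + x / 4)" using a x by (intro mult_mono) auto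
  finally have "(1 + x / 4) * (1 + x / 4) \<le> exp (x / 2)" .
  moreover have "x \<le> (1 + x / 4) * (1 + x / 4)"
  proof -
    have "0 \<le> (1 - x / 4) * (1 - x / 4)" by simp
    then show ?thesis by (simp add: algebra_simps)
  qed
  ultimately show ?thesis by linarith
qed

lemma xexp_bound:
  fixes x :: real and n :: nat
  assumes x: "x \<ge> 0" and n: "n \<ge> 1"
  shows "x * exp (- x) \<le> 2 * ln n * exp (- x) + 1 / n"
proof (cases "x \<le> 2 * ln n")
  case True
  have "x * exp (- x) \<le> 2 * ln n * exp (- x)" using True by (intro mult_right_mono) auto
  moreover have "0 \<le> 1 / real n" by simp
  ultimately show ?thesis by linarith
next
  case False
  have "x * exp (- x) \<le> exp (x / 2) * exp (- x)" using x_le_exp_half[OF x] by (intro mult_right_mono) auto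
  also have "\<dots> = exp (- (x / 2))" by (simp add: exp_add[symmetric])
  also have "\<dots> \<le> exp (- ln n)" using False by simp
  also have "\<dots> = 1 / n" using n by (simp add: exp_minus divide_inverse)
  finally have "x * exp (- x) \<le> 1 / n" .
  moreover have "0 \<le> 2 * ln n * exp (- x)" using n by simp
  ultimately show ?thesis by linarith
qed

lemma gibbs_energy:
  fixes lam :: "'a \<Rightarrow> real"
  assumes fin: "finite K" and ne: "K \<noteq> {}" and b: "\<beta> > 0"
  shows "(\<Sum>k\<in>K. exp (- \<beta> * lam k) * lam k)
      \<le> (Min (lam ` K) + (2 * ln (card K) + 1) / \<beta>) * (\<Sum>k\<in>K. exp (- \<beta> * lam k))"
proof -
  define l0 where "l0 = Min (lam ` K)"
  define n where "n = card K"
  define Z where "Z = (\<Sum>k\<in>K. exp (- \<beta> * lam k))"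
  have n1: "n \<ge> 1" using fin ne unfolding n_def by (simp add: Suc_le_eq card_gt_0_iff)
  have l0le: "\<And>k. k \<in> K \<Longrightarrow> l0 \<le> lam k" unfolding l0_def using fin by auto
  obtain k0 where k0: "k0 \<in> K" "lam k0 = l0" unfolding l0_def using fin ne
    by (metis (mono_tags, lifting) Min_in empty_is_image finite_imageI imageE)
  have Zge: "exp (- \<beta> * l0) \<le> Z"
  proof -
    have "exp (- \<beta> * lam k0) \<le> Z" unfolding Z_def using fin k0 by (intro member_le_sum) auto
    then show ?thesis using k0 by simp
  qed
  have per: "\<And>k. k \<in> K \<Longrightarrow> (lam k - l0) * exp (- \<beta> * lam k)
      \<le> (2 * ln n / \<beta>) * exp (- \<beta> * lam k) + exp (- \<beta> * l0) / (n * \<beta>)"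
  proof -
    fix k assume k: "k \<in> K"
    define x where "x = \<beta> * (lam k - l0)"
    have x0: "x \<ge> 0" unfolding x_def using b l0le[OF k] by simp
    have ex: "exp (- x) * exp (- \<beta> * l0) = exp (- \<beta> * lam k)"
      unfolding x_def by (simp add: exp_add[symmetric] algebra_simps)
    have "x * exp (- x) \<le> 2 * ln n * exp (- x) + 1 / n" by (rule xexp_bound[OF x0 n1])
    then have "x * exp (- x) * (exp (- \<beta> * l0) / \<beta>) \<le> (2 * ln n * exp (- x) + 1 / n) * (exp (- \<beta> * l0) / \<beta>)"
      using b by (intro mult_right_mono) auto
    moreover have "x * exp (- x) * (exp (- \<beta> * l0) / \<beta>) = (lam k - l0) * exp (- \<beta> * lam k)"
      using b ex[symmetric] unfolding x_def by (simp add: field_simps)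
    moreover have "(2 * ln n * exp (- x) + 1 / n) * (exp (- \<beta> * l0) / \<beta>)
        = (2 * ln n / \<beta>) * exp (- \<beta> * lam k) + exp (- \<beta> * l0) / (n * \<beta>)"
      using b n1 ex[symmetric] by (simp add: field_simps)
    ultimately show "(lam k - l0) * exp (- \<beta> * lam k)
      \<le> (2 * ln n / \<beta>) * exp (- \<beta> * lam k) + exp (- \<beta> * l0) / (n * \<beta>)" by simp
  qed
  have "(\<Sum>k\<in>K. (lam k - l0) * exp (- \<beta> * lam k))
      \<le> (\<Sum>k\<in>K. (2 * ln n / \<beta>) * exp (- \<beta> * lam k) + exp (- \<beta> * l0) / (n * \<beta>))"
    by (intro sum_mono per)
  also have "\<dots> = (2 * ln n / \<beta>) * Z + exp (- \<beta> * l0) / \<beta>"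
    unfolding Z_def using n1 by (simp add: sum.distrib sum_distrib_left n_def[symmetric])
  also have "\<dots> \<le> (2 * ln n / \<beta>) * Z + Z / \<beta>"
    using Zge b by (simp add: divide_right_mono)
  finally have A: "(\<Sum>k\<in>K. (lam k - l0) * exp (- \<beta> * lam k)) \<le> (2 * ln n / \<beta>) * Z + Z / \<beta>" .
  have B: "(\<Sum>k\<in>K. (lam k - l0) * exp (- \<beta> * lam k)) = (\<Sum>k\<in>K. exp (- \<beta> * lam k) * lam k) - l0 * Z"
    unfolding Z_def by (simp add: algebra_simps sum_subtractf sum_distrib_left)
  have "(\<Sum>k\<in>K. exp (- \<beta> * lam k) * lam k) \<le> l0 * Z + (2 * ln n / \<beta>) * Z + Z / \<beta>"
    using A B by linarith
  also have "\<dots> = (l0 + (2 * ln n + 1) / \<beta>) * Z" using b by (simp add: field_simps)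
  finally show ?thesis unfolding l0_def n_def Z_def .
qed

definition occ :: "nat \<Rightarrow> nat set \<Rightarrow> complex" where "occ m S = (if m \<in> S then 1 else 0)"
definition Dv :: "nat \<Rightarrow> nat \<Rightarrow> nat set \<Rightarrow> complex" where
  "Dv L d S = (\<Sum>x\<in>sites L d. occ (mode x Up) S * occ (mode x Dn) S)"
definition Mv :: "nat \<Rightarrow> nat \<Rightarrow> nat set \<Rightarrow> complex" where
  "Mv L d S = (\<Sum>x\<in>sites L d. eta L d x / 2 * (occ (mode x Up) S + -1 * occ (mode x Dn) S))"
definition HS :: "nat \<Rightarrow> nat \<Rightarrow> nat set set" where
  "HS L d = {S \<in> Pow {0..<nmodes L d}. card S = nsites L d}"

lemma isdiag_cong: "isdiag M A f \<Longrightarrow> (\<And>S. f S = g S) \<Longrightarrow> isdiag M A g"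
  unfolding isdiag_def by auto

lemma num_isdiag: "isdiag (nmodes L d) (num L d x \<sigma>) (occ (mode x \<sigma>))"
  unfolding num_def by (rule isdiag_cong[OF num_diag]) (simp add: occ_def)

lemma do_isdiag: "isdiag (nmodes L d) (double_occ L d) (Dv L d)"
  unfolding double_occ_def
  by (rule isdiag_cong[OF isdiag_sum[OF isdiag_mult[OF num_isdiag num_isdiag]]]) (simp add: Dv_def)

lemma sm_isdiag: "isdiag (nmodes L d) (stag_mag L d) (Mv L d)"
  unfolding stag_mag_def
  by (rule isdiag_cong[OF isdiag_sum[OF isdiag_smult[OF isdiag_add[OF num_isdiag isdiag_smult[OF num_isdiag]]]]])
     (simp add: Mv_def)

lemma H_entry: "S \<in> Pow {0..<nmodes L d} \<Longrightarrow> hubbard_H L d t U h T S =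
   of_real U * (if T = S then Dv L d S else 0) + (hopping L d t T S + - of_real h * (if T = S then Mv L d S else 0))"
  using do_isdiag[of L d] sm_isdiag[of L d] unfolding hubbard_H_def op_add_def op_smult_def isdiag_def by auto

lemma H_np: "np (nmodes L d) (hubbard_H L d t U h)"
  unfolding hubbard_H_def
  by (intro np_add np_smult hopping_np np_diag[OF do_isdiag] np_diag[OF sm_isdiag])

lemma occ_real: "cnj (occ m S) = occ m S" unfolding occ_def by simp
lemma eta_real: "cnj (eta L d x) = eta L d x" unfolding eta_def by simp
lemma Dv_real: "cnj (Dv L d S) = Dv L d S" unfolding Dv_def by (simp add: occ_real)
lemma Mv_real: "cnj (Mv L d S) = Mv L d S" unfolding Mv_def by (simp add: occ_real eta_real)

lemma H_herm: "hermf (nmodes L d) (hubbard_H L d t U h)"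
  unfolding hubbard_H_def
  by (intro herm_add herm_smult hopping_herm herm_diag[OF do_isdiag] herm_diag[OF sm_isdiag])
     (simp_all add: Dv_real Mv_real)

lemma sum_sub_pow: "K \<subseteq> Pow {0..<(M::nat)} \<Longrightarrow> (\<Sum>S\<in>K. cmod (f S)) \<le> (\<Sum>S\<in>Pow {0..<M}. cmod (f S))"
  by (intro sum_mono2) auto

lemma quad_bound:
  assumes rb: "rowb M A c" and cb: "colb M A c" and sub: "K \<subseteq> Pow {0..<M}"
    and nv: "(\<Sum>T\<in>K. (cmod (v T))^2) = 1"
  shows "cmod (\<Sum>T\<in>K. \<Sum>S\<in>K. cnj (v T) * A T S * v S) \<le> c"
proof -
  have rK: "\<And>T. T \<in> K \<Longrightarrow> (\<Sum>S\<in>K. cmod (A T S)) \<le> c"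
    using rb sub sum_sub_pow[OF sub, of "A _"] unfolding rowb_def by (meson order_trans subsetD)
  have cK: "\<And>S. S \<in> K \<Longrightarrow> (\<Sum>T\<in>K. cmod (A T S)) \<le> c"
    using cb sub sum_sub_pow[OF sub, of "\<lambda>T. A T _"] unfolding colb_def by (meson order_trans subsetD)
  have "cmod (\<Sum>T\<in>K. \<Sum>S\<in>K. cnj (v T) * A T S * v S) \<le> (\<Sum>T\<in>K. cmod (\<Sum>S\<in>K. cnj (v T) * A T S * v S))"
    by (rule norm_sum)
  also have "\<dots> \<le> (\<Sum>T\<in>K. \<Sum>S\<in>K. cmod (A T S) * (cmod (v T) * cmod (v S)))"
    by (intro sum_mono order_trans[OF norm_sum]) (simp add: norm_mult mult_ac)
  also have "\<dots> \<le> (\<Sum>T\<in>K. \<Sum>S\<in>K. cmod (A T S) * (((cmod (v T))^2 + (cmod (v S))^2) / 2))"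
  proof (intro sum_mono mult_left_mono)
    fix T S
    have "0 \<le> (cmod (v T) - cmod (v S))^2" by simp
    then show "cmod (v T) * cmod (v S) \<le> ((cmod (v T))^2 + (cmod (v S))^2) / 2"
      by (simp add: power2_eq_square algebra_simps)
  qed simp
  also have "\<dots> = (1/2) * (\<Sum>T\<in>K. (cmod (v T))^2 * (\<Sum>S\<in>K. cmod (A T S)))
       + (1/2) * (\<Sum>S\<in>K. (cmod (v S))^2 * (\<Sum>T\<in>K. cmod (A T S)))"
  proof -
    have "(\<Sum>T\<in>K. \<Sum>S\<in>K. cmod (A T S) * (((cmod (v T))^2 + (cmod (v S))^2) / 2))
       = (\<Sum>T\<in>K. \<Sum>S\<in>K. (1/2) * ((cmod (v T))^2 * cmod (A T S))) + (\<Sum>T\<in>K. \<Sum>S\<in>K. (1/2) * ((cmod (v S))^2 * cmod (A T S)))"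
      by (simp add: sum.distrib[symmetric] algebra_simps add_divide_distrib)
    also have "(\<Sum>T\<in>K. \<Sum>S\<in>K. (1/2) * ((cmod (v S))^2 * cmod (A T S))) = (\<Sum>S\<in>K. \<Sum>T\<in>K. (1/2) * ((cmod (v S))^2 * cmod (A T S)))"
      by (rule sum.swap)
    finally show ?thesis by (simp add: sum_distrib_left)
  qed
  also have "\<dots> \<le> (1/2) * (\<Sum>T\<in>K. (cmod (v T))^2 * c) + (1/2) * (\<Sum>S\<in>K. (cmod (v S))^2 * c)"
    using rK cK by (intro add_mono mult_left_mono sum_mono) auto
  also have "\<dots> = c" using nv by (simp add: sum_distrib_right[symmetric])
  finally show ?thesis .
qed

lemma HS_sub: "HS L d \<subseteq> Pow {0..<nmodes L d}" unfolding HS_def by auto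
lemma HS_fin: "finite (HS L d)" by (rule finite_subset[OF HS_sub]) simp

definition S0 :: "nat \<Rightarrow> nat \<Rightarrow> nat set" where "S0 L d = (\<lambda>x. mode x Up) ` sites L d"

lemma S0_HS: "S0 L d \<in> HS L d"
proof -
  have "S0 L d \<subseteq> {0..<nmodes L d}" unfolding S0_def sites_def mode_def nmodes_def by auto
  moreover have "card (S0 L d) = nsites L d"
  proof -
    have "inj_on (\<lambda>x. mode x Up) (sites L d)" unfolding mode_def by (auto intro: inj_onI)
    then show ?thesis unfolding S0_def nsites_def sites_def by (simp add: card_image)
  qed
  ultimately show ?thesis unfolding HS_def by auto
qed

lemma Dv_S0: "Dv L d (S0 L d) = 0"
proof -
  have "\<And>x. occ (mode x Dn) (S0 L d) = 0"
  proof -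
    fix x
    have "mode x Dn \<notin> S0 L d" unfolding S0_def mode_def by auto presburger
    then show "occ (mode x Dn) (S0 L d) = 0" unfolding occ_def by simp
  qed
  then show ?thesis unfolding Dv_def by simp
qed

lemma cmod_eta: "cmod (eta L d x) = 1" unfolding eta_def by (simp add: norm_power)

lemma cmod_occ_diff: "cmod (occ a S + -1 * occ b S) \<le> 1"
  unfolding occ_def by auto

lemma cmod_Mv: "cmod (Mv L d S) \<le> real (L ^ d) / 2"
proof -
  have "cmod (Mv L d S) \<le> (\<Sum>x\<in>sites L d. cmod (eta L d x / 2 * (occ (mode x Up) S + -1 * occ (mode x Dn) S)))"
    unfolding Mv_def by (rule norm_sum)
  also have "\<dots> \<le> (\<Sum>x\<in>sites L d. 1 / 2)"
  proof (intro sum_mono)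
    fix x
    have "cmod (eta L d x / 2 * (occ (mode x Up) S + -1 * occ (mode x Dn) S))
        = cmod (occ (mode x Up) S + -1 * occ (mode x Dn) S) / 2"
      by (simp add: norm_mult norm_divide cmod_eta)
    then show "cmod (eta L d x / 2 * (occ (mode x Up) S + -1 * occ (mode x Dn) S)) \<le> 1 / 2"
      using cmod_occ_diff by simp
  qed
  also have "\<dots> = real (L ^ d) / 2" unfolding sites_def by simp
  finally show ?thesis .
qed

lemma Dv_re: "Dv L d S = of_real (Re (Dv L d S))" "Re (Dv L d S) \<ge> 0"
proof -
  have "Dv L d S = of_real (\<Sum>x\<in>sites L d. (if mode x Up \<in> S then 1 else 0) * (if mode x Dn \<in> S then 1 else 0))"
    unfolding Dv_def occ_def of_real_sum by (intro sum.cong) auto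
  then show "Dv L d S = of_real (Re (Dv L d S))" "Re (Dv L d S) \<ge> 0"
    by (auto intro!: sum_nonneg)
qed

lemma cnjV: "cnj v * v = of_real ((cmod v)^2)"
  using complex_norm_square[of v] by (simp add: mult.commute)
lemma Vcnj: "v * cnj v = of_real ((cmod v)^2)"
  using complex_norm_square[of v] by simp

lemma sum_w_shift: "(\<Sum>k\<in>K. w k * (l k + C)) / Z = (\<Sum>k\<in>K. w k * l k) / Z + C * (\<Sum>k\<in>K. w k) / (Z::real)"
  by (simp add: algebra_simps sum.distrib sum_distrib_left add_divide_distrib)

lemma gibbs_rep:
  assumes L: "L > 0" and b: "\<beta> > 0"
  shows "\<exists>\<mu>. (\<forall>S\<in>HS L d. \<mu> S \<ge> 0) \<and> (\<Sum>S\<in>HS L d. \<mu> S) = 1 \<and>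
    (\<forall>Obs f. isdiag (nmodes L d) Obs f \<longrightarrow> gibbs_hf L d t \<beta> U h Obs = (\<Sum>S\<in>HS L d. f S * of_real (\<mu> S))) \<and>
    U * (\<Sum>S\<in>HS L d. \<mu> S * Re (Dv L d S)) \<le> 8 * \<bar>t\<bar> * real (L ^ d * d) + \<bar>h\<bar> * real (L ^ d)
       + (2 * ln (card (HS L d)) + 1) / \<beta>"
proof -
  define M where "M = nmodes L d"
  define K where "K = HS L d"
  define H where "H = hubbard_H L d t U h"
  have Ksub: "K \<subseteq> Pow {0..<M}" unfolding K_def M_def by (rule HS_sub)
  have finK: "finite K" unfolding K_def by (rule HS_fin)
  have S0K: "S0 L d \<in> K" unfolding K_def by (rule S0_HS)
  have Kne: "K \<noteq> {}" using S0K by auto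
  have hermK: "eqon K (adjm H) H"
    unfolding eqon_def adjm_def
  proof (intro ballI)
    fix i j assume "i \<in> K" "j \<in> K"
    then show "cnj (H j i) = H i j" using H_herm[of L d t U h] Ksub unfolding hermf_def H_def M_def by blast
  qed
  obtain V lam where VU1: "eqon K (mm K (adjm V) V) idm" and VU2: "eqon K (mm K V (adjm V)) idm"
    and VE: "\<forall>k\<in>K. \<forall>i\<in>K. (\<Sum>j\<in>K. H i j * V j k) = of_real (lam k) * V i k"
    using spectral[OF finK hermK] by blast
  define X where "X = op_smult (- of_real \<beta>) H"
  have npX: "np M X" unfolding X_def M_def H_def by (intro np_smult H_np)
  have XE: "\<forall>k\<in>K. \<forall>i\<in>K. (\<Sum>j\<in>K. X i j * V j k) = of_real (- \<beta> * lam k) * V i k"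
  proof (intro ballI)
    fix k i assume k: "k \<in> K" and i: "i \<in> K"
    have "(\<Sum>j\<in>K. X i j * V j k) = - of_real \<beta> * (\<Sum>j\<in>K. H i j * V j k)"
      unfolding X_def op_smult_def by (simp add: sum_distrib_left mult.assoc)
    also have "\<dots> = of_real (- \<beta> * lam k) * V i k" using VE k i by simp
    finally show "(\<Sum>j\<in>K. X i j * V j k) = of_real (- \<beta> * lam k) * V i k" .
  qed
  have Kdef: "K = {S \<in> Pow {0..<M}. card S = nsites L d}" unfolding K_def HS_def M_def ..
  define E where "E = op_exp M X"
  define w where "w k = exp (- \<beta> * lam k)" for k
  define p where "p S k = (cmod (V S k))^2" for S k
  have wpos: "\<And>k. w k > 0" unfolding w_def by simp
  have pnn: "\<And>S k. p S k \<ge> 0" unfolding p_def by simp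
  have ew: "\<And>k. exp (complex_of_real (- \<beta> * lam k)) = complex_of_real (w k)"
    unfolding w_def by (rule exp_of_real)
  have Ef: "\<And>T S. T \<in> K \<Longrightarrow> S \<in> K \<Longrightarrow> E T S = (\<Sum>k\<in>K. of_real (w k) * (V T k * cnj (V S k)))"
  proof -
    fix T S assume T: "T \<in> K" and S: "S \<in> K"
    show "E T S = (\<Sum>k\<in>K. of_real (w k) * (V T k * cnj (V S k)))"
      unfolding E_def using exp_formula[OF npX Kdef VU2 XE T S] by (simp only: ew)
  qed
  have Ediag: "\<And>S. S \<in> K \<Longrightarrow> E S S = of_real (\<Sum>k\<in>K. w k * p S k)"
    using Ef by (simp add: Vcnj p_def)
  have pcol: "\<And>k. k \<in> K \<Longrightarrow> (\<Sum>S\<in>K. p S k) = 1"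
  proof -
    fix k assume k: "k \<in> K"
    have "mm K (adjm V) V k k = 1" using VU1 k unfolding eqon_def idm_def by auto
    then have "(\<Sum>S\<in>K. of_real (p S k)) = (1::complex)" unfolding mm_def adjm_def p_def by (simp add: cnjV)
    then show "(\<Sum>S\<in>K. p S k) = 1" by (metis of_real_eq_1_iff of_real_sum)
  qed
  have prow: "\<And>S. S \<in> K \<Longrightarrow> (\<Sum>k\<in>K. p S k) = 1"
  proof -
    fix S assume S: "S \<in> K"
    have "mm K V (adjm V) S S = 1" using VU2 S unfolding eqon_def idm_def by auto
    then have "(\<Sum>k\<in>K. of_real (p S k)) = (1::complex)" unfolding mm_def adjm_def p_def by (simp add: Vcnj)
    then show "(\<Sum>k\<in>K. p S k) = 1" by (metis of_real_eq_1_iff of_real_sum)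
  qed
  define Zr where "Zr = (\<Sum>k\<in>K. w k)"
  have Zpos: "Zr > 0" unfolding Zr_def using finK Kne wpos by (intro sum_pos) auto
  define \<mu> where "\<mu> S = (\<Sum>k\<in>K. w k * p S k) / Zr" for S
  have mu_nn: "\<forall>S\<in>K. \<mu> S \<ge> 0"
  proof
    fix S
    have "0 \<le> (\<Sum>k\<in>K. w k * p S k)" by (intro sum_nonneg mult_nonneg_nonneg pnn less_imp_le[OF wpos])
    then show "\<mu> S \<ge> 0" unfolding \<mu>_def using Zpos by simp
  qed
  have swp: "(\<Sum>S\<in>K. \<Sum>k\<in>K. w k * p S k) = Zr"
  proof -
    have "(\<Sum>S\<in>K. \<Sum>k\<in>K. w k * p S k) = (\<Sum>k\<in>K. w k * (\<Sum>S\<in>K. p S k))"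
      by (subst sum.swap) (simp add: sum_distrib_left)
    also have "\<dots> = Zr" unfolding Zr_def using pcol by simp
    finally show ?thesis .
  qed
  have mu_sum: "(\<Sum>S\<in>K. \<mu> S) = 1"
    unfolding \<mu>_def using swp Zpos by (simp add: sum_divide_distrib[symmetric])
  have tr: "\<And>Obs f. isdiag M Obs f \<Longrightarrow> trace_hf L d (op_mult M Obs E) = (\<Sum>S\<in>K. f S * E S S)"
  proof -
    fix Obs f assume D: "isdiag M Obs f"
    have "trace_hf L d (op_mult M Obs E) = (\<Sum>S\<in>K. op_mult M Obs E S S)"
      unfolding trace_hf_def K_def HS_def ..
    also have "\<dots> = (\<Sum>S\<in>K. f S * E S S)"
    proof (rule sum.cong[OF refl])
      fix S assume S: "S \<in> K"
      have "op_mult M Obs E S S = (\<Sum>R\<in>Pow {0..<M}. (if S = R then f S * E S S else 0))"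
        unfolding op_mult_def using D unfolding isdiag_def by (intro sum.cong) auto
      also have "\<dots> = f S * E S S" using S Ksub by auto
      finally show "op_mult M Obs E S S = f S * E S S" .
    qed
    finally show "trace_hf L d (op_mult M Obs E) = (\<Sum>S\<in>K. f S * E S S)" .
  qed
  have trE: "trace_hf L d E = of_real Zr"
  proof -
    have "trace_hf L d E = (\<Sum>S\<in>K. E S S)" unfolding trace_hf_def K_def HS_def ..
    also have "\<dots> = (\<Sum>S\<in>K. of_real (\<Sum>k\<in>K. w k * p S k))" using Ediag by simp
    also have "\<dots> = of_real Zr" using swp by (simp only: of_real_sum[symmetric])
    finally show ?thesis .
  qed
  have mue: "\<And>S. complex_of_real (\<mu> S) = complex_of_real (\<Sum>k\<in>K. w k * p S k) / complex_of_real Zr"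
    unfolding \<mu>_def by (simp only: of_real_divide)
  have gib: "\<And>Obs f. isdiag M Obs f \<Longrightarrow> gibbs_hf L d t \<beta> U h Obs = (\<Sum>S\<in>K. f S * of_real (\<mu> S))"
  proof -
    fix Obs f assume D: "isdiag M Obs f"
    have gE: "gibbs_hf L d t \<beta> U h Obs = trace_hf L d (op_mult M Obs E) / trace_hf L d E"
      unfolding gibbs_hf_def E_def X_def H_def M_def Let_def ..
    also have "\<dots> = (\<Sum>S\<in>K. f S * of_real (\<Sum>k\<in>K. w k * p S k)) / of_real Zr"
      using tr[OF D] trE Ediag by simp
    also have "\<dots> = (\<Sum>S\<in>K. f S * of_real (\<mu> S))"
      by (simp only: mue sum_divide_distrib times_divide_eq_right)
    finally show "gibbs_hf L d t \<beta> U h Obs = (\<Sum>S\<in>K. f S * of_real (\<mu> S))" .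
  qed
  define cT where "cT = 4 * \<bar>t\<bar> * real (L ^ d * d)"
  define N where "N = real (L ^ d)"
  have Ksub': "K \<subseteq> Pow {0..<nmodes L d}" using Ksub unfolding M_def .
  have hq: "\<And>k. k \<in> K \<Longrightarrow> cmod (\<Sum>T\<in>K. \<Sum>S\<in>K. cnj (V T k) * hopping L d t T S * V S k) \<le> cT"
  proof -
    fix k assume k: "k \<in> K"
    show "cmod (\<Sum>T\<in>K. \<Sum>S\<in>K. cnj (V T k) * hopping L d t T S * V S k) \<le> cT"
      unfolding cT_def
      by (rule quad_bound[OF hopping_rowb hopping_colb Ksub']) (use pcol[OF k] in \<open>simp add: p_def\<close>)
  qed
  have rowH: "\<And>T k. T \<in> K \<Longrightarrow> (\<Sum>S\<in>K. H T S * V S k) =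
      of_real U * (Dv L d T * V T k) + (\<Sum>S\<in>K. hopping L d t T S * V S k) - of_real h * (Mv L d T * V T k)"
  proof -
    fix T k assume T: "T \<in> K"
    have "(\<Sum>S\<in>K. H T S * V S k) = (\<Sum>S\<in>K. of_real U * (if T = S then Dv L d S * V S k else 0)
        + hopping L d t T S * V S k - of_real h * (if T = S then Mv L d S * V S k else 0))"
    proof (rule sum.cong[OF refl])
      fix S assume S: "S \<in> K"
      then have SP: "S \<in> Pow {0..<nmodes L d}" using Ksub' by auto
      show "H T S * V S k = of_real U * (if T = S then Dv L d S * V S k else 0)
        + hopping L d t T S * V S k - of_real h * (if T = S then Mv L d S * V S k else 0)"
        unfolding H_def H_entry[OF SP] by (cases "T = S") (simp_all add: algebra_simps)
    qed
    also have "\<dots> = of_real U * (Dv L d T * V T k) + (\<Sum>S\<in>K. hopping L d t T S * V S k) - of_real h * (Mv L d T * V T k)"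
      using T finK by (simp add: sum.distrib sum_subtractf sum_distrib_left[symmetric])
    finally show "(\<Sum>S\<in>K. H T S * V S k) =
      of_real U * (Dv L d T * V T k) + (\<Sum>S\<in>K. hopping L d t T S * V S k) - of_real h * (Mv L d T * V T k)" .
  qed
  have lam_eq: "\<And>k. k \<in> K \<Longrightarrow> of_real (lam k) = of_real U * (\<Sum>T\<in>K. Dv L d T * of_real (p T k))
     + (\<Sum>T\<in>K. \<Sum>S\<in>K. cnj (V T k) * hopping L d t T S * V S k) - of_real h * (\<Sum>T\<in>K. Mv L d T * of_real (p T k))"
  proof -
    fix k assume k: "k \<in> K"
    have "of_real (lam k) = of_real (lam k) * (\<Sum>T\<in>K. of_real (p T k))"
      using pcol[OF k] by (simp only: of_real_sum[symmetric]) simp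
    also have "\<dots> = (\<Sum>T\<in>K. cnj (V T k) * (of_real (lam k) * V T k))"
      unfolding sum_distrib_left
    proof (rule sum.cong[OF refl])
      fix T
      show "of_real (lam k) * of_real (p T k) = cnj (V T k) * (of_real (lam k) * V T k)"
        unfolding p_def cnjV[symmetric] by (simp only: mult_ac)
    qed
    also have "\<dots> = (\<Sum>T\<in>K. cnj (V T k) * (\<Sum>S\<in>K. H T S * V S k))"
      using VE k by (intro sum.cong refl) simp
    also have "\<dots> = (\<Sum>T\<in>K. of_real U * (Dv L d T * of_real (p T k)) + (\<Sum>S\<in>K. cnj (V T k) * hopping L d t T S * V S k)
        - of_real h * (Mv L d T * of_real (p T k)))"
    proof (rule sum.cong[OF refl])
      fix T assume T: "T \<in> K"
      have c: "cnj (V T k) * V T k = of_real (p T k)" unfolding p_def by (rule cnjV)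
      show "cnj (V T k) * (\<Sum>S\<in>K. H T S * V S k) = of_real U * (Dv L d T * of_real (p T k)) + (\<Sum>S\<in>K. cnj (V T k) * hopping L d t T S * V S k)
        - of_real h * (Mv L d T * of_real (p T k))"
        unfolding rowH[OF T] c[symmetric] by (simp add: algebra_simps sum_distrib_left)
    qed
    also have "\<dots> = of_real U * (\<Sum>T\<in>K. Dv L d T * of_real (p T k))
     + (\<Sum>T\<in>K. \<Sum>S\<in>K. cnj (V T k) * hopping L d t T S * V S k) - of_real h * (\<Sum>T\<in>K. Mv L d T * of_real (p T k))"
      by (simp add: sum.distrib sum_subtractf sum_distrib_left)
    finally show "of_real (lam k) = of_real U * (\<Sum>T\<in>K. Dv L d T * of_real (p T k))
     + (\<Sum>T\<in>K. \<Sum>S\<in>K. cnj (V T k) * hopping L d t T S * V S k) - of_real h * (\<Sum>T\<in>K. Mv L d T * of_real (p T k))" .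
  qed
  have Ubound: "\<And>k. k \<in> K \<Longrightarrow> U * (\<Sum>T\<in>K. Re (Dv L d T) * p T k) \<le> lam k + cT + \<bar>h\<bar> * N / 2"
  proof -
    fix k assume k: "k \<in> K"
    define hqk where "hqk = (\<Sum>T\<in>K. \<Sum>S\<in>K. cnj (V T k) * hopping L d t T S * V S k)"
    define mq where "mq = (\<Sum>T\<in>K. Mv L d T * of_real (p T k))"
    have le: "lam k = U * (\<Sum>T\<in>K. Re (Dv L d T) * p T k) + Re hqk - h * Re mq"
    proof -
      have "lam k = Re (of_real (lam k))" by simp
      also have "\<dots> = Re (of_real U * (\<Sum>T\<in>K. Dv L d T * of_real (p T k)) + hqk - of_real h * mq)"
        using lam_eq[OF k] unfolding hqk_def mq_def by simp
      also have "\<dots> = U * (\<Sum>T\<in>K. Re (Dv L d T) * p T k) + Re hqk - h * Re mq"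
        by (simp add: Re_sum)
      finally show ?thesis .
    qed
    have "Re hqk \<ge> - cT" using hq[OF k] abs_Re_le_cmod[of hqk] unfolding hqk_def by linarith
    moreover have "h * Re mq \<le> \<bar>h\<bar> * N / 2"
    proof -
      have "cmod mq \<le> (\<Sum>T\<in>K. cmod (Mv L d T * of_real (p T k)))" unfolding mq_def by (rule norm_sum)
      also have "\<dots> \<le> (\<Sum>T\<in>K. N / 2 * p T k)"
      proof (rule sum_mono)
        fix T
        have "cmod (Mv L d T) * p T k \<le> N / 2 * p T k"
          using cmod_Mv[of L d T] pnn[of T k] unfolding N_def by (rule mult_right_mono)
        then show "cmod (Mv L d T * of_real (p T k)) \<le> N / 2 * p T k"
          using pnn[of T k] by (simp add: norm_mult)
      qed
      also have "\<dots> = N / 2 * (\<Sum>T\<in>K. p T k)" by (simp only: sum_distrib_left)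
      also have "\<dots> = N / 2" using pcol[OF k] by simp
      finally have "cmod mq \<le> N / 2" .
      then have "\<bar>Re mq\<bar> \<le> N / 2" using abs_Re_le_cmod[of mq] by linarith
      then have "\<bar>h\<bar> * \<bar>Re mq\<bar> \<le> \<bar>h\<bar> * (N / 2)" by (rule mult_left_mono) simp
      then have "\<bar>h * Re mq\<bar> \<le> \<bar>h\<bar> * (N / 2)" by (simp only: abs_mult)
      then show ?thesis by simp
    qed
    ultimately show "U * (\<Sum>T\<in>K. Re (Dv L d T) * p T k) \<le> lam k + cT + \<bar>h\<bar> * N / 2" using le by linarith
  qed
  have S0b: "Min (lam ` K) \<le> cT + \<bar>h\<bar> * N / 2"
  proof -
    define s0 where "s0 = S0 L d"
    have Hs0: "H s0 s0 = (\<Sum>k\<in>K. of_real (lam k) * of_real (p s0 k))"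
    proof -
      have "H s0 s0 = (\<Sum>R\<in>K. H s0 R * idm R s0)"
        using S0K finK unfolding s0_def idm_def by (simp add: if_distrib[of "\<lambda>x. _ * x"] cong: if_cong)
      also have "\<dots> = (\<Sum>R\<in>K. H s0 R * (\<Sum>k\<in>K. V R k * cnj (V s0 k)))"
        using VU2 S0K unfolding eqon_def mm_def adjm_def s0_def by (intro sum.cong refl) auto
      also have "\<dots> = (\<Sum>k\<in>K. (\<Sum>R\<in>K. H s0 R * V R k) * cnj (V s0 k))"
        by (simp add: sum_distrib_left sum_distrib_right mult_ac) (rule sum.swap)
      also have "\<dots> = (\<Sum>k\<in>K. of_real (lam k) * of_real (p s0 k))"
        using VE S0K unfolding s0_def p_def by (intro sum.cong refl) (simp add: Vcnj mult.assoc)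
      finally show ?thesis .
    qed
    have "Re (H s0 s0) = (\<Sum>k\<in>K. lam k * p s0 k)" using Hs0 by (simp add: Re_sum)
    moreover have "(\<Sum>k\<in>K. lam k * p s0 k) \<ge> Min (lam ` K)"
    proof -
      have "(\<Sum>k\<in>K. Min (lam ` K) * p s0 k) \<le> (\<Sum>k\<in>K. lam k * p s0 k)"
        using finK pnn by (intro sum_mono mult_right_mono) auto
      moreover have "(\<Sum>k\<in>K. Min (lam ` K) * p s0 k) = Min (lam ` K)"
        using prow[OF S0K[folded s0_def]] by (simp add: sum_distrib_left[symmetric])
      ultimately show ?thesis by simp
    qed
    moreover have "Re (H s0 s0) \<le> cT + \<bar>h\<bar> * N / 2"
    proof -
      have "H s0 s0 = hopping L d t s0 s0 - of_real h * Mv L d s0"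
        using Ksub' S0K unfolding H_def s0_def by (auto simp: H_entry Dv_S0)
      then have "Re (H s0 s0) = Re (hopping L d t s0 s0) - h * Re (Mv L d s0)" by simp
      moreover have "Re (hopping L d t s0 s0) \<le> cT"
      proof -
        have "cmod (hopping L d t s0 s0) \<le> (\<Sum>S\<in>Pow {0..<nmodes L d}. cmod (hopping L d t s0 S))"
          using Ksub' S0K unfolding s0_def by (intro member_le_sum) auto
        also have "\<dots> \<le> cT" using hopping_rowb[of L d t] Ksub' S0K unfolding rowb_def cT_def s0_def by blast
        finally show ?thesis using complex_Re_le_cmod order_trans by blast
      qed
      moreover have "- (h * Re (Mv L d s0)) \<le> \<bar>h\<bar> * N / 2"
      proof -
        have "\<bar>Re (Mv L d s0)\<bar> \<le> N / 2" using abs_Re_le_cmod[of "Mv L d s0"] cmod_Mv[of L d s0] unfolding N_def by linarith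
        then have "\<bar>h\<bar> * \<bar>Re (Mv L d s0)\<bar> \<le> \<bar>h\<bar> * (N / 2)" by (rule mult_left_mono) simp
        then have "\<bar>h * Re (Mv L d s0)\<bar> \<le> \<bar>h\<bar> * (N / 2)" by (simp only: abs_mult)
        then show ?thesis by linarith
      qed
      ultimately show ?thesis by linarith
    qed
    ultimately show ?thesis by linarith
  qed
  have GE: "(\<Sum>k\<in>K. w k * lam k) \<le> (Min (lam ` K) + (2 * ln (card K) + 1) / \<beta>) * Zr"
    using gibbs_energy[OF finK Kne b, of lam] unfolding w_def Zr_def .
  have "U * (\<Sum>S\<in>K. \<mu> S * Re (Dv L d S)) = (\<Sum>k\<in>K. w k * (U * (\<Sum>T\<in>K. Re (Dv L d T) * p T k))) / Zr"
  proof -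
    have "(\<Sum>S\<in>K. \<mu> S * Re (Dv L d S)) = (\<Sum>S\<in>K. \<Sum>k\<in>K. w k * p S k * Re (Dv L d S)) / Zr"
      unfolding \<mu>_def by (simp add: sum_divide_distrib sum_distrib_right)
    also have "\<dots> = (\<Sum>k\<in>K. w k * (\<Sum>T\<in>K. Re (Dv L d T) * p T k)) / Zr"
      by (subst sum.swap) (simp add: sum_distrib_left mult_ac)
    finally show ?thesis by (simp add: sum_distrib_left mult_ac)
  qed
  also have "\<dots> \<le> (\<Sum>k\<in>K. w k * (lam k + cT + \<bar>h\<bar> * N / 2)) / Zr"
    using Zpos wpos Ubound by (intro divide_right_mono sum_mono mult_left_mono) (auto intro: less_imp_le)
  also have "\<dots> = (\<Sum>k\<in>K. w k * lam k) / Zr + (cT + \<bar>h\<bar> * N / 2)"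
    using sum_w_shift[where w=w and l=lam and K=K and C="cT + \<bar>h\<bar> * N / 2" and Z=Zr] Zpos unfolding Zr_def by (simp add: add.assoc)
  also have "\<dots> \<le> (Min (lam ` K) + (2 * ln (card K) + 1) / \<beta>) + (cT + \<bar>h\<bar> * N / 2)"
    using GE Zpos by (simp add: pos_divide_le_eq)
  also have "\<dots> \<le> 2 * cT + \<bar>h\<bar> * N + (2 * ln (card K) + 1) / \<beta>"
    using S0b by linarith
  finally have EB: "U * (\<Sum>S\<in>K. \<mu> S * Re (Dv L d S)) \<le> 2 * cT + \<bar>h\<bar> * N + (2 * ln (card K) + 1) / \<beta>" .
  show ?thesis
    apply (rule exI[of _ \<mu>])
    using mu_nn mu_sum gib EB unfolding K_def M_def cT_def N_def by auto
qed

definition ou :: "nat \<Rightarrow> nat set \<Rightarrow> real" where "ou x S = (if mode x Up \<in> S then 1 else 0)"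
definition od :: "nat \<Rightarrow> nat set \<Rightarrow> real" where "od x S = (if mode x Dn \<in> S then 1 else 0)"
definition cf :: "nat \<Rightarrow> nat \<Rightarrow> nat set \<Rightarrow> complex" where
  "cf L d S = (\<Sum>x\<in>sites L d. eta L d x * of_real (ou x S + od x S - 1))"

lemma ntot_isdiag: "isdiag (nmodes L d) (ntot L d x) (\<lambda>S. of_real (ou x S + od x S))"
  unfolding ntot_def by (rule isdiag_cong[OF isdiag_add[OF num_isdiag num_isdiag]]) (simp add: occ_def ou_def od_def)

lemma A_isdiag: "isdiag (nmodes L d) (op_add (ntot L d x) (op_smult (-1) op_id)) (\<lambda>S. of_real (ou x S + od x S - 1))"
  by (rule isdiag_cong[OF isdiag_add[OF ntot_isdiag isdiag_smult[OF isdiag_id]]]) simp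

lemma q_isdiag: "isdiag (nmodes L d) (q_ch L d x) (\<lambda>S. of_real ((ou x S + od x S - 1)^2))"
  unfolding q_ch_def Let_def
  by (rule isdiag_cong[OF isdiag_mult[OF A_isdiag A_isdiag]]) (simp add: power2_eq_square)

lemma nn_isdiag: "isdiag (nmodes L d) (op_mult (nmodes L d) (num L d x Up) (num L d x Dn)) (\<lambda>S. of_real (ou x S * od x S))"
  by (rule isdiag_cong[OF isdiag_mult[OF num_isdiag num_isdiag]]) (simp add: occ_def ou_def od_def)

lemma C_isdiag: "isdiag (nmodes L d) (C_ch L d) (cf L d)"
  unfolding C_ch_def
  by (rule isdiag_cong[OF isdiag_sum[OF isdiag_smult[OF A_isdiag]]]) (simp add: cf_def)

lemma CC_isdiag: "isdiag (nmodes L d) (op_mult (nmodes L d) (C_ch L d) (C_ch L d)) (\<lambda>S. cf L d S * cf L d S)"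
  by (rule isdiag_mult[OF C_isdiag C_isdiag])

lemma ReDv: "Re (Dv L d S) = (\<Sum>x\<in>sites L d. ou x S * od x S)"
  unfolding Dv_def Re_sum by (intro sum.cong refl) (simp add: occ_def ou_def od_def)

lemma card_lt_sum: "real (card ((S::nat set) \<inter> {..<n})) = (\<Sum>i<n. if i \<in> S then 1 else 0)"
proof (induction n)
  case (Suc n)
  show ?case
  proof (cases "n \<in> S")
    case True
    have "S \<inter> {..<Suc n} = insert n (S \<inter> {..<n})" using True by auto
    then have "card (S \<inter> {..<Suc n}) = Suc (card (S \<inter> {..<n}))" by simp
    then show ?thesis using Suc True by simp
  next
    case False
    have "S \<inter> {..<Suc n} = S \<inter> {..<n}" using False by (auto simp: less_Suc_eq)
    then show ?thesis using Suc False by simp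
  qed
qed simp

lemma sum_pairs: "(\<Sum>i<2 * (N::nat). f i) = (\<Sum>x<N. f (2 * x) + f (2 * x + 1) :: real)"
proof (induction N)
  case (Suc N)
  have "2 * Suc N = Suc (Suc (2 * N))" by simp
  then show ?case using Suc by (simp add: add.assoc)
qed simp

lemma count_occ:
  assumes S: "S \<in> HS L d"
  shows "(\<Sum>x\<in>sites L d. ou x S + od x S) = real (L ^ d)"
proof -
  have Ssub: "S \<subseteq> {..<2 * L ^ d}" using S unfolding HS_def nmodes_def by auto
  have cS: "card S = L ^ d" using S unfolding HS_def nsites_def by auto
  have "real (L ^ d) = real (card (S \<inter> {..<2 * L ^ d}))" using Ssub cS by (simp add: Int_absorb2)
  also have "\<dots> = (\<Sum>i<2 * L ^ d. if i \<in> S then 1 else 0)" by (rule card_lt_sum)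
  also have "\<dots> = (\<Sum>x<L ^ d. (if 2 * x \<in> S then 1 else 0) + (if 2 * x + 1 \<in> S then 1 else 0))"
    by (rule sum_pairs)
  also have "\<dots> = (\<Sum>x\<in>sites L d. ou x S + od x S)"
    unfolding sites_def ou_def od_def mode_def by (simp add: atLeast0LessThan)
  finally show ?thesis by simp
qed

lemma ou01: "ou x S = 0 \<or> ou x S = 1" unfolding ou_def by auto
lemma od01: "od x S = 0 \<or> od x S = 1" unfolding od_def by auto

lemma sq_id: "(ou x S + od x S - 1)^2 = 1 - (ou x S + od x S) + 2 * (ou x S * od x S)"
  using ou01[of x S] od01[of x S] by auto

lemma F1:
  assumes S: "S \<in> HS L d"
  shows "(\<Sum>x\<in>sites L d. (ou x S + od x S - 1)^2) = 2 * Re (Dv L d S)"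
proof -
  have "(\<Sum>x\<in>sites L d. (ou x S + od x S - 1)^2)
      = (\<Sum>x\<in>sites L d. 1) - (\<Sum>x\<in>sites L d. ou x S + od x S) + 2 * (\<Sum>x\<in>sites L d. ou x S * od x S)"
    by (simp add: sq_id sum.distrib sum_subtractf sum_distrib_left)
  also have "\<dots> = 2 * Re (Dv L d S)" using count_occ[OF S] unfolding ReDv by (simp add: sites_def)
  finally show ?thesis .
qed

lemma abs_le_sq: "\<bar>ou x S + od x S - 1\<bar> \<le> (ou x S + od x S - 1)^2"
  using ou01[of x S] od01[of x S] by auto
lemma abs_le_1: "\<bar>ou x S + od x S - 1\<bar> \<le> 1"
  using ou01[of x S] od01[of x S] by auto

lemma cf_bound1:
  assumes S: "S \<in> HS L d"
  shows "cmod (cf L d S) \<le> 2 * Re (Dv L d S)"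
proof -
  have "cmod (cf L d S) \<le> (\<Sum>x\<in>sites L d. cmod (eta L d x * of_real (ou x S + od x S - 1)))"
    unfolding cf_def by (rule norm_sum)
  also have "\<dots> = (\<Sum>x\<in>sites L d. \<bar>ou x S + od x S - 1\<bar>)" by (intro sum.cong refl) (simp only: norm_mult cmod_eta mult_1 norm_of_real)
  also have "\<dots> \<le> (\<Sum>x\<in>sites L d. (ou x S + od x S - 1)^2)" by (intro sum_mono abs_le_sq)
  also have "\<dots> = 2 * Re (Dv L d S)" by (rule F1[OF S])
  finally show ?thesis .
qed

lemma cf_bound2: "cmod (cf L d S) \<le> real (L ^ d)"
proof -
  have "cmod (cf L d S) \<le> (\<Sum>x\<in>sites L d. cmod (eta L d x * of_real (ou x S + od x S - 1)))"
    unfolding cf_def by (rule norm_sum)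
  also have "\<dots> = (\<Sum>x\<in>sites L d. \<bar>ou x S + od x S - 1\<bar>)" by (intro sum.cong refl) (simp only: norm_mult cmod_eta mult_1 norm_of_real)
  also have "\<dots> \<le> (\<Sum>x\<in>sites L d. 1)" by (intro sum_mono abs_le_1)
  also have "\<dots> = real (L ^ d)" by (simp add: sites_def)
  finally show ?thesis .
qed

lemma card_HS_ln: "L > 0 \<Longrightarrow> 2 * ln (real (card (HS L d))) + 1 \<le> 5 * real (L ^ d)"
proof -
  assume L: "L > 0"
  have N1: "real (L ^ d) \<ge> 1" using L by simp
  have ne: "card (HS L d) > 0" using S0_HS[of L d] HS_fin[of L d] card_gt_0_iff by blast
  have "card (HS L d) \<le> card (Pow {0..<nmodes L d})" by (rule card_mono) (auto simp: HS_sub)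
  also have "\<dots> = 2 ^ (2 * L ^ d)" by (simp add: card_Pow nmodes_def)
  finally have c0: "real (card (HS L d)) \<le> real (2 ^ (2 * L ^ d))" by (simp only: of_nat_le_iff)
  then have c: "real (card (HS L d)) \<le> 2 ^ (2 * L ^ d)" by simp
  have "ln (real (card (HS L d))) \<le> ln (2 ^ (2 * L ^ d))" using c ne by (intro ln_mono) auto
  also have "\<dots> = real (2 * L ^ d) * ln 2" by (simp add: ln_realpow)
  also have "\<dots> \<le> real (2 * L ^ d) * 1" using ln_2_less_1 by (intro mult_left_mono) auto
  finally have "ln (real (card (HS L d))) \<le> 2 * real (L ^ d)" by simp
  then show ?thesis using N1 by linarith
qed

lemma Re_sq_le: "Re (z * z) \<le> (cmod z)^2"
proof -
  have "Re (z * z) = (Re z)^2 - (Im z)^2" by (simp add: power2_eq_square)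
  also have "\<dots> \<le> (Re z)^2 + (Im z)^2" by simp
  also have "\<dots> = (cmod z)^2" by (simp add: cmod_power2)
  finally show ?thesis .
qed

lemma Re_sum_ofreal: "Re (\<Sum>S\<in>K. of_real (a S) * of_real (b S)) = (\<Sum>S\<in>K. a S * b S)"
  by (simp only: of_real_mult[symmetric] of_real_sum[symmetric] Re_complex_of_real)

lemma main_bounds:
  assumes L: "L > 0" and b: "\<beta> > 0" and U: "U > 0" and hh: "\<bar>h\<bar> \<le> h0"
  shows "(1 / real (L ^ d)) * (\<Sum>x\<in>sites L d. Re (gibbs_hf L d t \<beta> U h (q_ch L d x)))
            \<le> 2 * ((8 * \<bar>t\<bar> * real d + h0 + 5 / \<beta>) / U) \<and>
         (1 / real (L ^ d)) * (\<Sum>x\<in>sites L d. Re (gibbs_hf L d t \<beta> U h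
              (op_mult (nmodes L d) (num L d x Up) (num L d x Dn)))) \<le> (8 * \<bar>t\<bar> * real d + h0 + 5 / \<beta>) / U \<and>
         cmod (gibbs_hf L d t \<beta> U h (C_ch L d) / of_nat (L ^ d)) \<le> 2 * ((8 * \<bar>t\<bar> * real d + h0 + 5 / \<beta>) / U) \<and>
         (1 / real (L ^ d) ^ 2) * Re (gibbs_hf L d t \<beta> U h
              (op_mult (nmodes L d) (C_ch L d) (C_ch L d))) \<le> 2 * ((8 * \<bar>t\<bar> * real d + h0 + 5 / \<beta>) / U)"
proof -
  define B where "B = (8 * \<bar>t\<bar> * real d + h0 + 5 / \<beta>) / U"
  define N where "N = real (L ^ d)"
  define K where "K = HS L d"
  have N1: "N \<ge> 1" unfolding N_def using L by simp
  obtain \<mu> where mu_nn: "\<forall>S\<in>K. \<mu> S \<ge> 0" and mu_sum: "(\<Sum>S\<in>K. \<mu> S) = 1"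
    and gib: "\<forall>Obs f. isdiag (nmodes L d) Obs f \<longrightarrow> gibbs_hf L d t \<beta> U h Obs = (\<Sum>S\<in>K. f S * of_real (\<mu> S))"
    and EB: "U * (\<Sum>S\<in>K. \<mu> S * Re (Dv L d S)) \<le> 8 * \<bar>t\<bar> * real (L ^ d * d) + \<bar>h\<bar> * real (L ^ d)
       + (2 * ln (card (HS L d)) + 1) / \<beta>"
    using gibbs_rep[OF L b, of d t U h] unfolding K_def by blast
  define Db where "Db = (\<Sum>S\<in>K. \<mu> S * Re (Dv L d S))"
  have Dbnn: "Db \<ge> 0" unfolding Db_def using mu_nn Dv_re(2) by (intro sum_nonneg mult_nonneg_nonneg) auto
  have DbB: "Db \<le> N * B"
  proof -
    have a: "(2 * ln (card (HS L d)) + 1) / \<beta> \<le> 5 * N / \<beta>"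
      using card_HS_ln[OF L, of d] b unfolding N_def by (intro divide_right_mono) auto
    have c: "\<bar>h\<bar> * N \<le> h0 * N" using hh N1 by (intro mult_right_mono) auto
    have "U * Db \<le> 8 * \<bar>t\<bar> * (N * real d) + h0 * N + 5 * N / \<beta>"
      using EB a c unfolding Db_def N_def by simp
    also have "\<dots> = N * (U * B)" unfolding B_def using U by (simp add: field_simps)
    finally have "U * Db \<le> U * (N * B)" by (simp add: mult_ac)
    then show ?thesis using U by simp
  qed
  have h0nn: "h0 \<ge> 0" using hh abs_ge_zero[of h] by linarith
  have Bnn: "B \<ge> 0" unfolding B_def using U b h0nn by (intro divide_nonneg_pos add_nonneg_nonneg) auto
  have Q1: "(\<Sum>x\<in>sites L d. Re (gibbs_hf L d t \<beta> U h (q_ch L d x))) = 2 * Db"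
  proof -
    have "(\<Sum>x\<in>sites L d. Re (gibbs_hf L d t \<beta> U h (q_ch L d x)))
        = (\<Sum>x\<in>sites L d. \<Sum>S\<in>K. (ou x S + od x S - 1)^2 * \<mu> S)"
      using Re_sum_ofreal gib[rule_format, OF q_isdiag] by (intro sum.cong refl) simp
    also have "\<dots> = (\<Sum>S\<in>K. \<mu> S * (\<Sum>x\<in>sites L d. (ou x S + od x S - 1)^2))"
      by (subst sum.swap) (simp add: sum_distrib_left mult_ac)
    also have "\<dots> = (\<Sum>S\<in>K. \<mu> S * (2 * Re (Dv L d S)))"
      using F1 unfolding K_def by (intro sum.cong refl) auto
    also have "\<dots> = 2 * Db" unfolding Db_def by (simp add: sum_distrib_left mult_ac)
    finally show ?thesis .
  qed
  have Q2: "(\<Sum>x\<in>sites L d. Re (gibbs_hf L d t \<beta> U h (op_mult (nmodes L d) (num L d x Up) (num L d x Dn)))) = Db"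
  proof -
    have "(\<Sum>x\<in>sites L d. Re (gibbs_hf L d t \<beta> U h (op_mult (nmodes L d) (num L d x Up) (num L d x Dn))))
        = (\<Sum>x\<in>sites L d. \<Sum>S\<in>K. (ou x S * od x S) * \<mu> S)"
      using Re_sum_ofreal gib[rule_format, OF nn_isdiag] by (intro sum.cong refl) simp
    also have "\<dots> = (\<Sum>S\<in>K. \<mu> S * (\<Sum>x\<in>sites L d. ou x S * od x S))"
      by (subst sum.swap) (simp add: sum_distrib_left mult_ac)
    also have "\<dots> = Db" unfolding Db_def ReDv ..
    finally show ?thesis .
  qed
  have Q3: "cmod (gibbs_hf L d t \<beta> U h (C_ch L d)) \<le> 2 * Db"
  proof -
    have "cmod (gibbs_hf L d t \<beta> U h (C_ch L d)) = cmod (\<Sum>S\<in>K. cf L d S * of_real (\<mu> S))"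
      using gib[rule_format, OF C_isdiag] by simp
    also have "\<dots> \<le> (\<Sum>S\<in>K. cmod (cf L d S * of_real (\<mu> S)))" by (rule norm_sum)
    also have "\<dots> \<le> (\<Sum>S\<in>K. \<mu> S * (2 * Re (Dv L d S)))"
    proof (rule sum_mono)
      fix S assume S: "S \<in> K"
      have "cmod (cf L d S * of_real (\<mu> S)) = \<mu> S * cmod (cf L d S)" using mu_nn S by (simp add: norm_mult)
      also have "\<dots> \<le> \<mu> S * (2 * Re (Dv L d S))"
        using cf_bound1[of S L d] S mu_nn unfolding K_def by (intro mult_left_mono) auto
      finally show "cmod (cf L d S * of_real (\<mu> S)) \<le> \<mu> S * (2 * Re (Dv L d S))" .
    qed
    also have "\<dots> = 2 * Db" unfolding Db_def by (simp add: sum_distrib_left mult_ac)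
    finally show ?thesis .
  qed
  have Q4: "Re (gibbs_hf L d t \<beta> U h (op_mult (nmodes L d) (C_ch L d) (C_ch L d))) \<le> 2 * N * Db"
  proof -
    have "Re (gibbs_hf L d t \<beta> U h (op_mult (nmodes L d) (C_ch L d) (C_ch L d)))
        = (\<Sum>S\<in>K. Re (cf L d S * cf L d S) * \<mu> S)"
      using gib[rule_format, OF CC_isdiag] by (simp add: Re_sum)
    also have "\<dots> \<le> (\<Sum>S\<in>K. (2 * N) * (\<mu> S * Re (Dv L d S)))"
    proof (rule sum_mono)
      fix S assume S: "S \<in> K"
      have "Re (cf L d S * cf L d S) \<le> cmod (cf L d S) * cmod (cf L d S)"
        using Re_sq_le[of "cf L d S"] by (simp add: power2_eq_square)
      also have "\<dots> \<le> (2 * Re (Dv L d S)) * N"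
        using cf_bound1[of S L d] cf_bound2[of L d S] S Dv_re(2)[of L d S] unfolding K_def N_def
        by (intro mult_mono) auto
      finally have "Re (cf L d S * cf L d S) \<le> (2 * Re (Dv L d S)) * N" .
      then have "Re (cf L d S * cf L d S) * \<mu> S \<le> (2 * Re (Dv L d S)) * N * \<mu> S"
        using mu_nn S by (intro mult_right_mono) auto
      then show "Re (cf L d S * cf L d S) * \<mu> S \<le> (2 * N) * (\<mu> S * Re (Dv L d S))"
        by (simp add: mult_ac)
    qed
    also have "\<dots> = 2 * N * Db" unfolding Db_def by (simp add: sum_distrib_left)
    finally show ?thesis .
  qed
  have R1: "(1 / N) * (2 * Db) \<le> 2 * B" using DbB N1 by (simp add: field_simps)
  have R2: "(1 / N) * Db \<le> B" using DbB N1 by (simp add: field_simps)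
  have R3: "(2 * Db) / N \<le> 2 * B" using DbB N1 by (simp add: field_simps)
  have R4: "(1 / N ^ 2) * (2 * N * Db) \<le> 2 * B" using DbB N1 by (simp add: field_simps power2_eq_square)
  have E3: "cmod (gibbs_hf L d t \<beta> U h (C_ch L d) / of_nat (L ^ d)) = cmod (gibbs_hf L d t \<beta> U h (C_ch L d)) / N"
    unfolding N_def by (simp only: norm_divide norm_of_nat)
  have "cmod (gibbs_hf L d t \<beta> U h (C_ch L d)) / N \<le> 2 * Db / N" using Q3 N1 by (simp add: divide_right_mono)
  then have F3: "cmod (gibbs_hf L d t \<beta> U h (C_ch L d) / of_nat (L ^ d)) \<le> 2 * B" using E3 R3 by linarith
  have "(1 / N ^ 2) * Re (gibbs_hf L d t \<beta> U h (op_mult (nmodes L d) (C_ch L d) (C_ch L d))) \<le> (1 / N ^ 2) * (2 * N * Db)"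
    using Q4 N1 by (intro mult_left_mono) auto
  then have F4: "(1 / N ^ 2) * Re (gibbs_hf L d t \<beta> U h (op_mult (nmodes L d) (C_ch L d) (C_ch L d))) \<le> 2 * B"
    using R4 by linarith
  show ?thesis using Q1 Q2 R1 R2 F3 F4 unfolding B_def N_def by simp
qed

lemma inv_lim: "((\<lambda>U::real. c / U) \<longlongrightarrow> 0) at_top"
  by (rule tendsto_divide_0[OF tendsto_const filterlim_at_top_imp_at_infinity[OF filterlim_ident]])

lemma g_lim: "((\<lambda>U::real. a / U + (c / U) * (1 / U)) \<longlongrightarrow> 0) at_top"
proof -
  have "((\<lambda>U::real. a / U + (c / U) * (1 / U)) \<longlongrightarrow> 0 + 0 * 0) at_top"
    by (intro tendsto_add tendsto_mult inv_lim)
  then show ?thesis by simp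
qed

theorem theorem1p9:
  fixes d :: nat and t :: real
  assumes "d \<ge> 1" and "t \<noteq> 0"
  shows "\<forall>l0 h0 :: real. l0 > 0 \<longrightarrow> h0 > 0 \<longrightarrow>
    (\<exists>U0 :: real. \<exists>\<epsilon> :: real \<Rightarrow> real \<Rightarrow> real.
       (\<forall>U \<beta>. \<epsilon> U \<beta> \<ge> 0) \<and>
       (\<forall>U \<beta> (L :: nat) h. U > 0 \<longrightarrow> U \<ge> U0 \<longrightarrow> \<beta> > 0 \<longrightarrow> \<beta> * J0 t U \<ge> l0 \<longrightarrow>
          even L \<longrightarrow> L > 0 \<longrightarrow> \<bar>h\<bar> \<le> h0 \<longrightarrow>
          (1 / real (L ^ d)) * (\<Sum>x\<in>sites L d. Re (gibbs_hf L d t \<beta> U h (q_ch L d x))) \<le> \<epsilon> U \<beta> \<and>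
          (1 / real (L ^ d)) * (\<Sum>x\<in>sites L d. Re (gibbs_hf L d t \<beta> U h
              (op_mult (nmodes L d) (num L d x Up) (num L d x Dn)))) \<le> \<epsilon> U \<beta> / 2 \<and>
          cmod (gibbs_hf L d t \<beta> U h (C_ch L d) / of_nat (L ^ d)) \<le> \<epsilon> U \<beta> \<and>
          (1 / real (L ^ d) ^ 2) * Re (gibbs_hf L d t \<beta> U h
              (op_mult (nmodes L d) (C_ch L d) (C_ch L d))) \<le> \<epsilon> U \<beta>) \<and>
       ((\<lambda>U. SUP \<beta>\<in>{\<beta>. \<beta> * J0 t U \<ge> l0}. ereal (\<epsilon> U \<beta>)) \<longlongrightarrow> 0) at_top)"
proof (intro allI impI)
  fix l0 h0 :: real
  assume l0: "l0 > 0" and h0: "h0 > 0"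
  have t2: "t^2 > 0" using assms(2) by simp
  define \<epsilon> where "\<epsilon> U \<beta> = 2 * ((8 * \<bar>t\<bar> * real d + h0 + 5 / \<bar>\<beta>\<bar>) / \<bar>U\<bar>)" for U \<beta> :: real
  have enn: "\<forall>U \<beta>. \<epsilon> U \<beta> \<ge> 0" unfolding \<epsilon>_def using h0 by (auto intro!: divide_nonneg_nonneg add_nonneg_nonneg)
  have bounds: "\<forall>U \<beta> (L :: nat) h. U > 0 \<longrightarrow> U \<ge> 1 \<longrightarrow> \<beta> > 0 \<longrightarrow> \<beta> * J0 t U \<ge> l0 \<longrightarrow>
          even L \<longrightarrow> L > 0 \<longrightarrow> \<bar>h\<bar> \<le> h0 \<longrightarrow>
          (1 / real (L ^ d)) * (\<Sum>x\<in>sites L d. Re (gibbs_hf L d t \<beta> U h (q_ch L d x))) \<le> \<epsilon> U \<beta> \<and>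
          (1 / real (L ^ d)) * (\<Sum>x\<in>sites L d. Re (gibbs_hf L d t \<beta> U h
              (op_mult (nmodes L d) (num L d x Up) (num L d x Dn)))) \<le> \<epsilon> U \<beta> / 2 \<and>
          cmod (gibbs_hf L d t \<beta> U h (C_ch L d) / of_nat (L ^ d)) \<le> \<epsilon> U \<beta> \<and>
          (1 / real (L ^ d) ^ 2) * Re (gibbs_hf L d t \<beta> U h
              (op_mult (nmodes L d) (C_ch L d) (C_ch L d))) \<le> \<epsilon> U \<beta>"
  proof (intro allI impI)
    fix U \<beta> :: real and L :: nat and h :: real
    assume U: "U > 0" and b: "\<beta> > 0" and L: "L > 0" and hh: "\<bar>h\<bar> \<le> h0"
    define B where "B = (8 * \<bar>t\<bar> * real d + h0 + 5 / \<beta>) / U"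
    have e: "\<epsilon> U \<beta> = 2 * B" unfolding \<epsilon>_def B_def using U b by simp
    have e2: "\<epsilon> U \<beta> / 2 = B" unfolding e by simp
    note mb = main_bounds[OF L b U hh, where t=t and d=d, folded B_def]
    show "(1 / real (L ^ d)) * (\<Sum>x\<in>sites L d. Re (gibbs_hf L d t \<beta> U h (q_ch L d x))) \<le> \<epsilon> U \<beta> \<and>
          (1 / real (L ^ d)) * (\<Sum>x\<in>sites L d. Re (gibbs_hf L d t \<beta> U h
              (op_mult (nmodes L d) (num L d x Up) (num L d x Dn)))) \<le> \<epsilon> U \<beta> / 2 \<and>
          cmod (gibbs_hf L d t \<beta> U h (C_ch L d) / of_nat (L ^ d)) \<le> \<epsilon> U \<beta> \<and>
          (1 / real (L ^ d) ^ 2) * Re (gibbs_hf L d t \<beta> U h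
              (op_mult (nmodes L d) (C_ch L d) (C_ch L d))) \<le> \<epsilon> U \<beta>"
      unfolding e2 unfolding e using mb by blast
  qed
  define a where "a = 2 * (8 * \<bar>t\<bar> * real d + h0)"
  define c where "c = 10 * (4 * t^2) / l0"
  define g where "g U = a / U + (c / U) * (1 / U)" for U :: real
  have gle: "\<And>U \<beta>. U > 0 \<Longrightarrow> \<beta> * J0 t U \<ge> l0 \<Longrightarrow> \<epsilon> U \<beta> \<le> g U"
  proof -
    fix U \<beta> :: real assume U: "U > 0" and bJ: "\<beta> * J0 t U \<ge> l0"
    have J: "J0 t U = 4 * t^2 / U" unfolding J0_def ..
    have bpos: "\<beta> > 0"
    proof (rule ccontr)
      assume nb: "\<not> \<beta> > 0"
      have Jnn: "J0 t U \<ge> 0" unfolding J using U by simp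
      have "\<beta> * J0 t U \<le> 0" using nb Jnn by (intro mult_nonpos_nonneg) auto
      then show False using bJ l0 by linarith
    qed
    have "l0 \<le> \<beta> * (4 * t^2) / U" using bJ unfolding J by simp
    then have "l0 * U \<le> \<beta> * (4 * t^2)" using U by (simp add: field_simps)
    then have ib: "1 / \<beta> \<le> (4 * t^2) / (l0 * U)" using bpos l0 U by (simp add: field_simps)
    have "\<epsilon> U \<beta> = a / U + 10 * (1 / \<beta>) / U" unfolding \<epsilon>_def a_def using U bpos by (simp add: field_simps)
    also have "\<dots> \<le> a / U + 10 * ((4 * t^2) / (l0 * U)) / U"
      using ib U by (intro add_left_mono divide_right_mono mult_left_mono) auto
    also have "\<dots> = g U" unfolding g_def c_def using U l0 by (simp add: field_simps)
    finally show "\<epsilon> U \<beta> \<le> g U" .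
  qed
  have lim: "((\<lambda>U. SUP \<beta>\<in>{\<beta>. \<beta> * J0 t U \<ge> l0}. ereal (\<epsilon> U \<beta>)) \<longlongrightarrow> 0) at_top"
  proof (rule tendsto_sandwich[of "\<lambda>_. 0" _ _ "\<lambda>U. ereal (g U)"])
    show "\<forall>\<^sub>F U in at_top. 0 \<le> (SUP \<beta>\<in>{\<beta>. \<beta> * J0 t U \<ge> l0}. ereal (\<epsilon> U \<beta>))"
      unfolding eventually_at_top_linorder
    proof (intro exI[of _ 1] allI impI)
      fix U :: real assume U: "U \<ge> 1"
      define b0 where "b0 = l0 * U / (4 * t^2)"
      have "b0 * J0 t U = l0" unfolding b0_def J0_def using U t2 by (simp add: field_simps)
      then have "b0 \<in> {\<beta>. \<beta> * J0 t U \<ge> l0}" by simp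
      moreover have "0 \<le> ereal (\<epsilon> U b0)" using enn by simp
      ultimately show "0 \<le> (SUP \<beta>\<in>{\<beta>. \<beta> * J0 t U \<ge> l0}. ereal (\<epsilon> U \<beta>))"
        by (rule SUP_upper2)
    qed
    show "\<forall>\<^sub>F U in at_top. (SUP \<beta>\<in>{\<beta>. \<beta> * J0 t U \<ge> l0}. ereal (\<epsilon> U \<beta>)) \<le> ereal (g U)"
      unfolding eventually_at_top_linorder
    proof (intro exI[of _ 1] allI impI)
      fix U :: real assume U: "U \<ge> 1"
      show "(SUP \<beta>\<in>{\<beta>. \<beta> * J0 t U \<ge> l0}. ereal (\<epsilon> U \<beta>)) \<le> ereal (g U)"
        using gle U by (intro SUP_least) auto
    qed
    show "((\<lambda>_. 0 :: ereal) \<longlongrightarrow> 0) at_top" by simp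
    have "((\<lambda>U. ereal (g U)) \<longlongrightarrow> ereal 0) at_top" unfolding g_def by (intro tendsto_ereal g_lim)
    then show "((\<lambda>U. ereal (g U)) \<longlongrightarrow> 0) at_top" by (simp add: zero_ereal_def)
  qed
  show "\<exists>U0 :: real. \<exists>\<epsilon> :: real \<Rightarrow> real \<Rightarrow> real.
       (\<forall>U \<beta>. \<epsilon> U \<beta> \<ge> 0) \<and>
       (\<forall>U \<beta> (L :: nat) h. U > 0 \<longrightarrow> U \<ge> U0 \<longrightarrow> \<beta> > 0 \<longrightarrow> \<beta> * J0 t U \<ge> l0 \<longrightarrow>
          even L \<longrightarrow> L > 0 \<longrightarrow> \<bar>h\<bar> \<le> h0 \<longrightarrow>
          (1 / real (L ^ d)) * (\<Sum>x\<in>sites L d. Re (gibbs_hf L d t \<beta> U h (q_ch L d x))) \<le> \<epsilon> U \<beta> \<and>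
          (1 / real (L ^ d)) * (\<Sum>x\<in>sites L d. Re (gibbs_hf L d t \<beta> U h
              (op_mult (nmodes L d) (num L d x Up) (num L d x Dn)))) \<le> \<epsilon> U \<beta> / 2 \<and>
          cmod (gibbs_hf L d t \<beta> U h (C_ch L d) / of_nat (L ^ d)) \<le> \<epsilon> U \<beta> \<and>
          (1 / real (L ^ d) ^ 2) * Re (gibbs_hf L d t \<beta> U h
              (op_mult (nmodes L d) (C_ch L d) (C_ch L d))) \<le> \<epsilon> U \<beta>) \<and>
       ((\<lambda>U. SUP \<beta>\<in>{\<beta>. \<beta> * J0 t U \<ge> l0}. ereal (\<epsilon> U \<beta>)) \<longlongrightarrow> 0) at_top"
    using enn bounds lim by blast
qed


end
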